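(* Let $\mathbb{F}$ be a field, $r>3$, and let $\mathcal{F}$ be a flag of length $r$ in $\mathbb{F}^{n}$ and $\mathcal{F}'$ a flag of length $r$ in $\mathbb{F}^{n'}$ (where $n,n'$ may differ). Then the semigroups $\varphi(\mathcal{F})\subseteq M(n,\mathbb{F})$ and $\varphi(\mathcal{F}')\subseteq M(n',\mathbb{F})$ are isomorphic if and only if $\mathrm{sig}(\mathcal{F})=\mathrm{sig}(\mathcal{F}')$.
   Context: $M(N,\mathbb{F})$ is the semigroup of $N\times N$ matrices over $\mathbb{F}$, identified with linear operators on $\mathbb{F}^N$. A flag of length $r$ in $\mathbb{F}^N$ is a chain $0=V_0\subsetneq V_1\subsetneq\cdots\subsetneq V_r=\mathbb{F}^N$ of subspaces; its signature is $\mathrm{sig}(\mathcal{F})=(d_1,\dots,d_r)$ with $d_i=\dim(V_i/V_{i-1})$. $\varphi(\mathcal{F})=\{a\in M(N,\mathbb{F}) : a(V_i)\subseteq V_{i-1}\text{ for all } i=1,\dots,r\}$; by the paper's results these are exactly the $r$-maximal nilpotent subsemigroups of $M(N,\mathbb{F})$. *)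

theory Defs
  imports "HOL-Analysis.Analysis"
begin

text \<open>Vectors of F^N are elements of type 'a^'n (N = CARD('n)); N x N matrices are 'a^'n^'n,
  acting on vectors by matrix-vector product. Subspaces and dimension are those of the
  vector space structure 'vec' over an arbitrary field 'a.\<close>

text \<open>A flag of length r: 0 = V 0, strictly increasing chain of subspaces, V r = whole space.\<close>
definition is_flag :: "nat \<Rightarrow> (nat \<Rightarrow> ('a::field ^ 'n) set) \<Rightarrow> bool" where
  "is_flag r V \<longleftrightarrow>
     V 0 = {0} \<and> V r = UNIV \<and> (\<forall>i\<le>r. vec.subspace (V i)) \<and>
     (\<forall>i\<in>{1..r}. V (i - 1) \<subset> V i)"

text \<open>Signature: d_i = dim (V_i / V_{i-1}) = dim V_i - dim V_{i-1}, i = 1..r.\<close>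
definition flag_sig :: "nat \<Rightarrow> (nat \<Rightarrow> ('a::field ^ 'n) set) \<Rightarrow> nat list" where
  "flag_sig r V = map (\<lambda>i. vec.dim (V (Suc i)) - vec.dim (V i)) [0..<r]"

definition flag_phi :: "nat \<Rightarrow> (nat \<Rightarrow> ('a::field ^ 'n) set) \<Rightarrow> ('a ^ 'n ^ 'n) set" where
  "flag_phi r V = {a. \<forall>i\<in>{1..r}. (\<lambda>x. a *v x) ` V i \<subseteq> V (i - 1)}"

text \<open>Isomorphism of multiplicative subsemigroups S, T (with matrix multiplication).\<close>
definition semigroup_iso_betw ::
  "('a::semiring_1 ^ 'n ^ 'n) set \<Rightarrow> ('a ^ 'm ^ 'm) set \<Rightarrow> ('a ^ 'n ^ 'n \<Rightarrow> 'a ^ 'm ^ 'm) \<Rightarrow> bool" where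
  "semigroup_iso_betw S T f \<longleftrightarrow> bij_betw f S T \<and> (\<forall>a\<in>S. \<forall>b\<in>S. f (a ** b) = f a ** f b)"

definition semigroups_isomorphic ::
  "('a::semiring_1 ^ 'n ^ 'n) set \<Rightarrow> ('a ^ 'm ^ 'm) set \<Rightarrow> bool" where
  "semigroups_isomorphic S T \<longleftrightarrow> (\<exists>f. semigroup_iso_betw S T f)"

end

theory Submission
  imports Defs
begin

(* ---- part Gen ---- *)

fun Bset :: "'x set \<Rightarrow> ('x \<Rightarrow> 'x \<Rightarrow> 'x) \<Rightarrow> 'x \<Rightarrow> nat \<Rightarrow> 'x set" where
  "Bset S m z 0 = {z}"
| "Bset S m z (Suc t) = {y\<in>S. \<forall>s\<in>S. m s y \<in> Bset S m z t}"

fun Aset :: "'x set \<Rightarrow> ('x \<Rightarrow> 'x \<Rightarrow> 'x) \<Rightarrow> 'x \<Rightarrow> nat \<Rightarrow> 'x set" where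
  "Aset S m z 0 = {z}"
| "Aset S m z (Suc t) = {x\<in>S. \<forall>s\<in>S. m x s \<in> Aset S m z t}"

definition biorth :: "('x \<Rightarrow> 'x \<Rightarrow> 'x) \<Rightarrow> 'x \<Rightarrow> 'x set \<Rightarrow> 'x set \<Rightarrow> nat \<Rightarrow> bool" where
  "biorth m z P Q k \<longleftrightarrow> (\<exists>x y. (\<forall>i<k. x i \<in> P \<and> y i \<in> Q) \<and>
      (\<forall>i<k. \<forall>j<k. m (y i) (x j) = z \<longleftrightarrow> i \<noteq> j))"

definition rid :: "'x set \<Rightarrow> ('x \<Rightarrow> 'x \<Rightarrow> 'x) \<Rightarrow> 'x \<Rightarrow> 'x set" where
  "rid S m x = (\<lambda>s. m x s) ` S"

definition Xset :: "'x set \<Rightarrow> ('x \<Rightarrow> 'x \<Rightarrow> 'x) \<Rightarrow> 'x \<Rightarrow> 'x set" where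
  "Xset S m z = Bset S m z 1 \<inter> Aset S m z 2"

definition Pt :: "'x set \<Rightarrow> ('x \<Rightarrow> 'x \<Rightarrow> 'x) \<Rightarrow> 'x \<Rightarrow> 'x set" where
  "Pt S m z = {x \<in> Xset S m z. rid S m x \<noteq> rid S m z \<and>
     (\<forall>y\<in>Xset S m z. rid S m y \<subseteq> rid S m x \<longrightarrow> rid S m y = rid S m z \<or> rid S m y = rid S m x)}"

definition sp2 :: "'x set \<Rightarrow> ('x \<Rightarrow> 'x \<Rightarrow> 'x) \<Rightarrow> 'x \<Rightarrow> 'x \<Rightarrow> 'x \<Rightarrow> 'x \<Rightarrow> bool" where
  "sp2 S m z y y' x \<longleftrightarrow> x \<in> Pt S m z \<and> (\<forall>w\<in>Bset S m z 1.
      rid S m y \<subseteq> rid S m w \<longrightarrow> rid S m y' \<subseteq> rid S m w \<longrightarrow> rid S m x \<subseteq> rid S m w)"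

inductive_set cl :: "'x set \<Rightarrow> ('x \<Rightarrow> 'x \<Rightarrow> 'x) \<Rightarrow> 'x \<Rightarrow> 'x set \<Rightarrow> 'x set"
  for S m z G where
  base: "x \<in> G \<Longrightarrow> x \<in> Pt S m z \<Longrightarrow> x \<in> cl S m z G"
| step: "y \<in> cl S m z G \<Longrightarrow> y' \<in> cl S m z G \<Longrightarrow> sp2 S m z y y' x \<Longrightarrow> x \<in> cl S m z G"

definition indepk :: "'x set \<Rightarrow> ('x \<Rightarrow> 'x \<Rightarrow> 'x) \<Rightarrow> 'x \<Rightarrow> nat \<Rightarrow> bool" where
  "indepk S m z k \<longleftrightarrow> (\<exists>x. (\<forall>i<k. x i \<in> Pt S m z) \<and>
      (\<forall>i<k. x i \<notin> cl S m z (x ` ({..<k} - {i}))))"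

lemma cl_Pt: "x \<in> cl S m z G \<Longrightarrow> x \<in> Pt S m z"
  by (induction rule: cl.induct) (auto simp: sp2_def)

locale siso =
  fixes S :: "'x set" and m1 z1 and T :: "'y set" and m2 z2 and f :: "'x \<Rightarrow> 'y"
  assumes bij: "bij_betw f S T"
    and hom: "\<And>a b. a \<in> S \<Longrightarrow> b \<in> S \<Longrightarrow> f (m1 a b) = m2 (f a) (f b)"
    and cl1: "\<And>a b. a \<in> S \<Longrightarrow> b \<in> S \<Longrightarrow> m1 a b \<in> S"
    and cl2: "\<And>a b. a \<in> T \<Longrightarrow> b \<in> T \<Longrightarrow> m2 a b \<in> T"
    and z1S: "z1 \<in> S" and z1: "\<And>s. s \<in> S \<Longrightarrow> m1 z1 s = z1 \<and> m1 s z1 = z1"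
    and z2T: "z2 \<in> T" and z2: "\<And>s. s \<in> T \<Longrightarrow> m2 z2 s = z2 \<and> m2 s z2 = z2"
begin

lemma fS: "x \<in> S \<Longrightarrow> f x \<in> T"
  by (rule bij_betw_apply[OF bij])

lemma finj: "x \<in> S \<Longrightarrow> y \<in> S \<Longrightarrow> f x = f y \<longleftrightarrow> x = y"
  by (rule inj_on_eq_iff[OF bij_betw_imp_inj_on[OF bij]])

lemma fsurj: "y \<in> T \<Longrightarrow> \<exists>x\<in>S. y = f x"
  using bij_betw_imp_surj_on[OF bij] by blast

lemma allT: "(\<forall>y\<in>T. Q y) \<longleftrightarrow> (\<forall>x\<in>S. Q (f x))"
proof
  assume "\<forall>y\<in>T. Q y" then show "\<forall>x\<in>S. Q (f x)" using fS by simp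
next
  assume h: "\<forall>x\<in>S. Q (f x)"
  show "\<forall>y\<in>T. Q y"
  proof
    fix y assume "y \<in> T"
    then obtain x where "x \<in> S" "y = f x" using fsurj by blast
    then show "Q y" using h by simp
  qed
qed

lemma fz: "f z1 = z2"
proof -
  have "m2 z2 (f z1) = z2" using z2 fS z1S by blast
  moreover have "m2 z2 (f z1) = f z1"
  proof -
    obtain x where x: "x \<in> S" "z2 = f x" using fsurj z2T by blast
    have "m2 z2 (f z1) = f (m1 x z1)" using hom x z1S by simp
    also have "\<dots> = f z1" using z1 x by simp
    finally show ?thesis .
  qed
  ultimately show ?thesis by simp
qed

lemma inv_siso: "siso T m2 z2 S m1 z1 (inv_into S f)"
proof
  show "bij_betw (inv_into S f) T S" using bij bij_betw_inv_into by blast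
  fix a b assume a: "a \<in> T" and b: "b \<in> T"
  obtain x where x: "x \<in> S" "a = f x" using fsurj a by blast
  obtain y where y: "y \<in> S" "b = f y" using fsurj b by blast
  have "m2 a b = f (m1 x y)" using hom x y by simp
  then show "inv_into S f (m2 a b) = m1 (inv_into S f a) (inv_into S f b)"
    using x y cl1 bij by (simp add: bij_betw_def)
qed (use cl1 cl2 z1S z1 z2T z2 in auto)

lemma B_iff: "x \<in> S \<Longrightarrow> x \<in> Bset S m1 z1 t \<longleftrightarrow> f x \<in> Bset T m2 z2 t"
proof (induction t arbitrary: x)
  case 0
  then show ?case using finj[OF _ z1S] fz by auto
next
  case (Suc t)
  have "(\<forall>s\<in>T. m2 s (f x) \<in> Bset T m2 z2 t) \<longleftrightarrow> (\<forall>s\<in>S. m2 (f s) (f x) \<in> Bset T m2 z2 t)"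
    by (rule allT)
  also have "\<dots> \<longleftrightarrow> (\<forall>s\<in>S. m1 s x \<in> Bset S m1 z1 t)"
    using Suc hom cl1 by auto
  finally show ?case using Suc fS by auto
qed

lemma A_iff: "x \<in> S \<Longrightarrow> x \<in> Aset S m1 z1 t \<longleftrightarrow> f x \<in> Aset T m2 z2 t"
proof (induction t arbitrary: x)
  case 0
  then show ?case using finj[OF _ z1S] fz by auto
next
  case (Suc t)
  have "(\<forall>s\<in>T. m2 (f x) s \<in> Aset T m2 z2 t) \<longleftrightarrow> (\<forall>s\<in>S. m2 (f x) (f s) \<in> Aset T m2 z2 t)"
    by (rule allT)
  also have "\<dots> \<longleftrightarrow> (\<forall>s\<in>S. m1 x s \<in> Aset S m1 z1 t)"
    using Suc hom cl1 by auto
  finally show ?case using Suc fS by auto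
qed

lemma B_sub: "Bset S m1 z1 t \<subseteq> S"
  by (cases t) (auto simp: z1S)

lemma A_sub: "Aset S m1 z1 t \<subseteq> S"
  by (cases t) (auto simp: z1S)

lemma X_iff: "x \<in> S \<Longrightarrow> x \<in> Xset S m1 z1 \<longleftrightarrow> f x \<in> Xset T m2 z2"
  unfolding Xset_def using B_iff[of x 1] A_iff[of x 2] by blast

lemma rid_img: "x \<in> S \<Longrightarrow> rid T m2 (f x) = f ` rid S m1 x"
proof -
  assume x: "x \<in> S"
  have "rid T m2 (f x) = (\<lambda>s. m2 (f x) s) ` (f ` S)"
    using bij by (simp add: rid_def bij_betw_def)
  also have "\<dots> = (\<lambda>s. f (m1 x s)) ` S"
    using hom x by (auto simp: image_iff)
  finally show ?thesis by (simp add: rid_def image_image)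
qed

lemma rid_S: "x \<in> S \<Longrightarrow> rid S m1 x \<subseteq> S"
  using cl1 by (auto simp: rid_def)

lemma rid_sub_iff: "x \<in> S \<Longrightarrow> y \<in> S \<Longrightarrow>
   rid T m2 (f x) \<subseteq> rid T m2 (f y) \<longleftrightarrow> rid S m1 x \<subseteq> rid S m1 y"
  unfolding rid_img
  by (rule inj_on_image_subset_iff[OF _ rid_S rid_S]) (use bij in \<open>auto simp: bij_betw_def\<close>)

lemma rid_eq_iff: "x \<in> S \<Longrightarrow> y \<in> S \<Longrightarrow>
   rid T m2 (f x) = rid T m2 (f y) \<longleftrightarrow> rid S m1 x = rid S m1 y"
  using rid_sub_iff by blast

lemma X_S: "Xset S m1 z1 \<subseteq> S" using B_sub unfolding Xset_def by auto

lemma X_S2: "Xset T m2 z2 \<subseteq> T"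
  unfolding Xset_def using z2T by auto

lemma Pt_iff: "x \<in> S \<Longrightarrow> x \<in> Pt S m1 z1 \<longleftrightarrow> f x \<in> Pt T m2 z2"
proof -
  assume x: "x \<in> S"
  let ?Q = "\<lambda>y. y \<in> Xset T m2 z2 \<longrightarrow> rid T m2 y \<subseteq> rid T m2 (f x) \<longrightarrow>
          rid T m2 y = rid T m2 z2 \<or> rid T m2 y = rid T m2 (f x)"
  let ?R = "\<lambda>y. y \<in> Xset S m1 z1 \<longrightarrow> rid S m1 y \<subseteq> rid S m1 x \<longrightarrow>
          rid S m1 y = rid S m1 z1 \<or> rid S m1 y = rid S m1 x"
  have e1: "(\<forall>y\<in>T. ?Q y) \<longleftrightarrow> (\<forall>y\<in>S. ?Q (f y))" by (rule allT)
  have e2: "?Q (f y) \<longleftrightarrow> ?R y" if y: "y \<in> S" for y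
    using X_iff[OF y] rid_sub_iff[OF y x] rid_eq_iff[OF y x] rid_eq_iff[OF y z1S] fz by simp
  have e3: "(\<forall>y\<in>S. ?R y) \<longleftrightarrow> (\<forall>y\<in>Xset S m1 z1. rid S m1 y \<subseteq> rid S m1 x \<longrightarrow>
          rid S m1 y = rid S m1 z1 \<or> rid S m1 y = rid S m1 x)"
    using X_S by blast
  have e4: "(\<forall>y\<in>T. ?Q y) \<longleftrightarrow> (\<forall>y\<in>Xset T m2 z2. rid T m2 y \<subseteq> rid T m2 (f x) \<longrightarrow>
          rid T m2 y = rid T m2 z2 \<or> rid T m2 y = rid T m2 (f x))"
    using X_S2 by blast
  have e5: "rid T m2 (f x) = rid T m2 z2 \<longleftrightarrow> rid S m1 x = rid S m1 z1"
    using rid_eq_iff[OF x z1S] fz by simp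
  show ?thesis
    unfolding Pt_def using X_iff[OF x] e1 e2 e3 e4 e5 by auto
qed

lemma Pt_S: "Pt S m1 z1 \<subseteq> S" using X_S by (auto simp: Pt_def)

lemma sp2_imp: "x \<in> S \<Longrightarrow> y \<in> S \<Longrightarrow> y' \<in> S \<Longrightarrow> sp2 S m1 z1 y y' x \<Longrightarrow> sp2 T m2 z2 (f y) (f y') (f x)"
proof -
  assume x: "x \<in> S" and y: "y \<in> S" and y': "y' \<in> S" and h: "sp2 S m1 z1 y y' x"
  let ?Q = "\<lambda>w. w \<in> Bset T m2 z2 1 \<longrightarrow>
      rid T m2 (f y) \<subseteq> rid T m2 w \<longrightarrow> rid T m2 (f y') \<subseteq> rid T m2 w \<longrightarrow> rid T m2 (f x) \<subseteq> rid T m2 w"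
  have "?Q (f w)" if w: "w \<in> S" for w
  proof -
    have "w \<in> Bset S m1 z1 1 \<longrightarrow>
      rid S m1 y \<subseteq> rid S m1 w \<longrightarrow> rid S m1 y' \<subseteq> rid S m1 w \<longrightarrow> rid S m1 x \<subseteq> rid S m1 w"
      using h unfolding sp2_def by blast
    then show ?thesis
      using B_iff[OF w, of 1] rid_sub_iff[OF y w] rid_sub_iff[OF y' w] rid_sub_iff[OF x w] by simp
  qed
  then have "\<forall>w\<in>T. ?Q w" using allT[of ?Q] by blast
  moreover have "Bset T m2 z2 1 \<subseteq> T" using z2T by auto
  moreover have "f x \<in> Pt T m2 z2" using h Pt_iff[OF x] unfolding sp2_def by blast
  ultimately show ?thesis unfolding sp2_def by blast
qed

lemma cl_imp: assumes G: "G \<subseteq> S" and x: "x \<in> cl S m1 z1 G" shows "f x \<in> cl T m2 z2 (f ` G)"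
  using x
proof (induction rule: cl.induct)
  case (base x)
  have "x \<in> S" using base G by auto
  then show ?case using base Pt_iff by (blast intro: cl.base)
next
  case (step y y' x)
  have xP: "x \<in> Pt S m1 z1" using step.hyps(3) unfolding sp2_def by (rule conjunct1)
  have S: "x \<in> S" "y \<in> S" "y' \<in> S"
    using xP cl_Pt[OF step.hyps(1)] cl_Pt[OF step.hyps(2)] Pt_S by auto
  have "sp2 T m2 z2 (f y) (f y') (f x)" by (rule sp2_imp[OF S step.hyps(3)])
  then show ?case by (rule cl.step[OF step.IH(1) step.IH(2)])
qed

end

lemma (in siso) cl_iff: assumes G: "G \<subseteq> S" and x: "x \<in> S"
  shows "f x \<in> cl T m2 z2 (f ` G) \<longleftrightarrow> x \<in> cl S m1 z1 G"
proof (rule iffI)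
  assume h: "f x \<in> cl T m2 z2 (f ` G)"
  interpret i: siso T m2 z2 S m1 z1 "inv_into S f" by (rule inv_siso)
  have fG: "f ` G \<subseteq> T" using G fS by blast
  have "inv_into S f (f x) \<in> cl S m1 z1 (inv_into S f ` f ` G)"
    by (rule i.cl_imp[OF fG h])
  moreover have "inv_into S f ` f ` G = G"
  proof -
    have "\<forall>x\<in>G. inv_into S f (f x) = x" using G inv_into_f_f[OF bij_betw_imp_inj_on[OF bij]] by blast
    then show ?thesis by (simp add: image_image)
  qed
  ultimately show "x \<in> cl S m1 z1 G" using inv_into_f_f[OF bij_betw_imp_inj_on[OF bij] x] by simp
next
  assume "x \<in> cl S m1 z1 G"
  then show "f x \<in> cl T m2 z2 (f ` G)" by (rule cl_imp[OF G])
qed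

lemma (in siso) indepk_imp: "indepk S m1 z1 k \<Longrightarrow> indepk T m2 z2 k"
proof -
  assume "indepk S m1 z1 k"
  then obtain x where x: "\<forall>i<k. x i \<in> Pt S m1 z1" "\<forall>i<k. x i \<notin> cl S m1 z1 (x ` ({..<k} - {i}))"
    unfolding indepk_def by blast
  have xS: "\<And>i. i < k \<Longrightarrow> x i \<in> S" using x Pt_S by auto
  show ?thesis unfolding indepk_def
  proof (intro exI[of _ "\<lambda>i. f (x i)"] conjI allI impI)
    fix i assume i: "i < k"
    show "f (x i) \<in> Pt T m2 z2" using Pt_iff xS x i by auto
    have sub: "x ` ({..<k} - {i}) \<subseteq> S" using xS by auto
    have "(\<lambda>i. f (x i)) ` ({..<k} - {i}) = f ` (x ` ({..<k} - {i}))" by auto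
    then show "f (x i) \<notin> cl T m2 z2 ((\<lambda>i. f (x i)) ` ({..<k} - {i}))"
      using cl_iff[OF sub xS[OF i]] x i by simp
  qed
qed

lemma (in siso) biorth_imp: "biorth m1 z1 (Bset S m1 z1 t) (Aset S m1 z1 t') k \<Longrightarrow>
    biorth m2 z2 (Bset T m2 z2 t) (Aset T m2 z2 t') k"
proof -
  assume "biorth m1 z1 (Bset S m1 z1 t) (Aset S m1 z1 t') k"
  then obtain x y where xy: "\<forall>i<k. x i \<in> Bset S m1 z1 t \<and> y i \<in> Aset S m1 z1 t'"
    "\<forall>i<k. \<forall>j<k. m1 (y i) (x j) = z1 \<longleftrightarrow> i \<noteq> j" unfolding biorth_def by blast
  have S: "\<And>i. i < k \<Longrightarrow> x i \<in> S \<and> y i \<in> S" using xy B_sub A_sub by blast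
  have 1: "\<forall>i<k. f (x i) \<in> Bset T m2 z2 t \<and> f (y i) \<in> Aset T m2 z2 t'"
  proof (intro allI impI conjI)
    fix i assume i: "i < k"
    show "f (x i) \<in> Bset T m2 z2 t" using B_iff[of "x i" t] S[OF i] xy i by blast
    show "f (y i) \<in> Aset T m2 z2 t'" using A_iff[of "y i" t'] S[OF i] xy i by blast
  qed
  have 2: "\<forall>i<k. \<forall>j<k. m2 (f (y i)) (f (x j)) = z2 \<longleftrightarrow> i \<noteq> j"
  proof (intro allI impI)
    fix i j assume i: "i < k" and j: "j < k"
    have "m2 (f (y i)) (f (x j)) = f (m1 (y i) (x j))" using hom S i j by auto
    moreover have "f (m1 (y i) (x j)) = z2 \<longleftrightarrow> m1 (y i) (x j) = z1"
      using finj[OF cl1 z1S, of "y i" "x j"] S[OF i] S[OF j] fz by simp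
    ultimately show "m2 (f (y i)) (f (x j)) = z2 \<longleftrightarrow> i \<noteq> j"
      using xy i j by simp
  qed
  show ?thesis unfolding biorth_def
    by (rule exI[of _ "\<lambda>i. f (x i)"], rule exI[of _ "\<lambda>i. f (y i)"]) (use 1 2 in blast)
qed

lemma (in siso) indepk_iff: "indepk T m2 z2 k \<longleftrightarrow> indepk S m1 z1 k"
  using indepk_imp siso.indepk_imp[OF inv_siso] by blast

lemma (in siso) biorth_iff: "biorth m2 z2 (Bset T m2 z2 t) (Aset T m2 z2 t') k \<longleftrightarrow>
  biorth m1 z1 (Bset S m1 z1 t) (Aset S m1 z1 t') k"
  using biorth_imp siso.biorth_imp[OF inv_siso] by blast


(* ---- part C1 ---- *)

definition Pm :: "('n::finite \<Rightarrow> nat) \<Rightarrow> ('a::field^'n^'n) set" where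
  "Pm lev = {a. \<forall>p q. a$p$q \<noteq> 0 \<longrightarrow> lev p < lev q}"

definition Em :: "'n::finite \<Rightarrow> 'n \<Rightarrow> 'a::field^'n^'n" where
  "Em p q = (\<chi> i j. if i = p \<and> j = q then 1 else 0)"

definition colm :: "'n::finite \<Rightarrow> 'a::field^'n \<Rightarrow> 'a^'n^'n" where
  "colm q v = (\<chi> i j. if j = q then v$i else 0)"

definition Std :: "('n::finite \<Rightarrow> nat) \<Rightarrow> nat \<Rightarrow> ('a::field^'n) set" where
  "Std lev j = {v. \<forall>p. v$p \<noteq> 0 \<longrightarrow> lev p \<le> j}"

definition mkm :: "('n::finite \<Rightarrow> 'a::field^'n) \<Rightarrow> 'a^'n^'n" where
  "mkm c = (\<chi> i j. (c j)$i)"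

lemma mult_nz: "(a ** b)$p$q \<noteq> (0::'a::field) \<Longrightarrow> \<exists>k. a$p$k \<noteq> 0 \<and> b$k$q \<noteq> 0"
proof (rule ccontr)
  assume h: "(a ** b)$p$q \<noteq> 0" and "\<not> (\<exists>k. a$p$k \<noteq> 0 \<and> b$k$q \<noteq> 0)"
  then have "\<forall>k. a$p$k * b$k$q = 0" by auto
  then have "(a ** b)$p$q = 0" unfolding matrix_matrix_mult_def by (simp, intro sum.neutral) auto
  with h show False by simp
qed

lemma mv_nz: "(a *v v)$p \<noteq> (0::'a::field) \<Longrightarrow> \<exists>k. a$p$k \<noteq> 0 \<and> v$k \<noteq> 0"
proof (rule ccontr)
  assume h: "(a *v v)$p \<noteq> 0" and "\<not> (\<exists>k. a$p$k \<noteq> 0 \<and> v$k \<noteq> 0)"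
  then have "\<forall>k. a$p$k * v$k = 0" by auto
  then have "(a *v v)$p = 0" unfolding matrix_vector_mult_def by (simp, intro sum.neutral) auto
  with h show False by simp
qed

lemma Pm_mult: "a \<in> Pm lev \<Longrightarrow> b \<in> Pm lev \<Longrightarrow> (a ** b :: 'a::field^'n::finite^'n) \<in> Pm lev"
proof -
  assume a: "a \<in> Pm lev" and b: "b \<in> Pm lev"
  show ?thesis unfolding Pm_def
  proof (intro CollectI allI impI)
    fix p q assume "(a ** b)$p$q \<noteq> 0"
    then obtain k where "a$p$k \<noteq> 0" "b$k$q \<noteq> 0" using mult_nz by blast
    then have "lev p < lev k" "lev k < lev q" using a b by (auto simp: Pm_def)
    then show "lev p < lev q" by simp
  qed
qed

lemma Pm_0: "(0::'a::field^'n::finite^'n) \<in> Pm lev"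
  by (simp add: Pm_def)

lemma Em_nth[simp]: "Em p q $ i $ j = (if i = p \<and> j = q then 1 else 0)"
  by (simp add: Em_def)

lemma colm_nth[simp]: "colm q v $ i $ j = (if j = q then v$i else 0)"
  by (simp add: colm_def)

lemma mkm_nth[simp]: "mkm c $ i $ j = (c j)$i"
  by (simp add: mkm_def)

lemma Em_mult_left: "(Em p k ** a :: 'a::field^'n::finite^'n)$i$j = (if i = p then a$k$j else 0)"
  by (simp add: matrix_matrix_mult_def if_distrib[of "\<lambda>x. x * _"] cong: if_cong)

lemma Em_mult_right: "(a ** Em k q :: 'a::field^'n::finite^'n)$i$j = (if j = q then a$i$k else 0)"
  by (simp add: matrix_matrix_mult_def if_distrib[of "\<lambda>x. _ * x"] sum.delta' cong: if_cong)

lemma Em_Em: "(Em a b ** Em c d :: 'a::field^'n::finite^'n) = (if b = c then Em a d else 0)"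
  by (simp add: vec_eq_iff Em_mult_right)

lemma Em_nz: "Em a b \<noteq> (0::'a::field^'n::finite^'n)"
proof
  assume "Em a b = (0::'a::field^'n::finite^'n)"
  then have "Em a b $ a $ b = (0::'a)" by simp
  then show False by simp
qed

lemma Em_Pm: "lev p < lev q \<Longrightarrow> (Em p q :: 'a::field^'n::finite^'n) \<in> Pm lev"
  by (simp add: Pm_def)

lemma colm_mv: "(colm q v *v u :: 'a::field^'n::finite) = u$q *s v"
  by (simp add: vec_eq_iff matrix_vector_mult_def mult.commute if_distrib[of "\<lambda>x. _ * x"] sum.delta' cong: if_cong)

lemma column_mult: "column q (a ** b :: 'a::field^'n::finite^'n) = a *v column q b"
  by (simp add: vec_eq_iff column_def matrix_matrix_mult_def matrix_vector_mult_def)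

lemma column_mkm[simp]: "column q (mkm c) = c q"
  by (simp add: vec_eq_iff column_def)

lemma mat_eq_columns: "(\<And>q. column q a = column q b) \<Longrightarrow> a = (b::'a::field^'n::finite^'n)"
  by (simp add: vec_eq_iff column_def)

lemma subspace_Std: "vec.subspace (Std lev j :: ('a::field^'n::finite) set)"
  unfolding vec.subspace_def Std_def by (auto; metis add.right_neutral)

lemma subspace_img:
  fixes A :: "'a::field^'n::finite^'n"
  shows "vec.subspace U \<Longrightarrow> vec.subspace ((\<lambda>v. A *v v) ` U)"
proof -
  assume U: "vec.subspace U"
  show ?thesis unfolding vec.subspace_def
  proof (intro conjI ballI allI)
    show "0 \<in> (\<lambda>v. A *v v) ` U" using vec.subspace_0[OF U] by (metis image_eqI matrix_vector_mult_0_right)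
    fix x y assume "x \<in> (\<lambda>v. A *v v) ` U" "y \<in> (\<lambda>v. A *v v) ` U"
    then obtain u w where "u \<in> U" "w \<in> U" "x = A *v u" "y = A *v w" by auto
    then show "x + y \<in> (\<lambda>v. A *v v) ` U"
      using vec.subspace_add[OF U] by (metis image_eqI matrix_vector_right_distrib)
  next
    fix c x assume "x \<in> (\<lambda>v. A *v v) ` U"
    then obtain u where "u \<in> U" "x = A *v u" by auto
    then show "c *s x \<in> (\<lambda>v. A *v v) ` U"
      using vec.subspace_scale[OF U] by (metis image_eqI vector_scalar_commute)
  qed
qed

lemma Pm_columns:
  assumes l: "\<forall>p. 1 \<le> lev p"
  shows "s \<in> Pm lev \<longleftrightarrow> (\<forall>q. column q s \<in> Std lev (lev q - 1))"
proof
  assume s: "s \<in> Pm lev"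
  show "\<forall>q. column q s \<in> Std lev (lev q - 1)"
  proof (intro allI)
    fix q show "column q s \<in> Std lev (lev q - 1)"
      unfolding Std_def
    proof (intro CollectI allI impI)
      fix p assume "column q s $ p \<noteq> 0"
      then have "lev p < lev q" using s by (simp add: Pm_def column_def)
      then show "lev p \<le> lev q - 1" by linarith
    qed
  qed
next
  assume h: "\<forall>q. column q s \<in> Std lev (lev q - 1)"
  show "s \<in> Pm lev" unfolding Pm_def
  proof (intro CollectI allI impI)
    fix p q assume "s$p$q \<noteq> 0"
    then have "lev p \<le> lev q - 1" using h unfolding Std_def column_def by auto
    moreover have "1 \<le> lev q" using l by blast
    ultimately show "lev p < lev q" by linarith
  qed
qed


(* ---- part C2 ---- *)

locale levs =
  fixes lev :: "'n::finite \<Rightarrow> nat" and r :: nat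
  assumes lev_ge1: "\<And>p. 1 \<le> lev p" and lev_le: "\<And>p. lev p \<le> r"
    and lev_surj: "\<And>i. 1 \<le> i \<Longrightarrow> i \<le> r \<Longrightarrow> \<exists>p. lev p = i"
    and r4: "4 \<le> r"
begin

lemma Bs_char: "t \<le> r \<Longrightarrow> Bset (Pm lev) (**) (0::'a::field^'n^'n) t =
   {y \<in> Pm lev. \<forall>p q. y$p$q \<noteq> 0 \<longrightarrow> lev p \<le> t}"
proof (induction t)
  case 0
  have "y = 0" if "y \<in> Pm lev" "\<forall>p q. y$p$q \<noteq> 0 \<longrightarrow> lev p \<le> 0" for y :: "'a^'n^'n"
  proof -
    have "\<forall>p q. y$p$q = 0"
    proof (intro allI)
      fix p q show "y$p$q = 0" using that(2) lev_ge1[of p] by auto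
    qed
    then show ?thesis by (simp add: vec_eq_iff)
  qed
  then show ?case using Pm_0 by auto
next
  case (Suc t)
  then have IH: "Bset (Pm lev) (**) (0::'a::field^'n^'n) t = {y \<in> Pm lev. \<forall>p q. y$p$q \<noteq> 0 \<longrightarrow> lev p \<le> t}"
    by simp
  show ?case
  proof (intro equalityI subsetI)
    fix y :: "'a^'n^'n" assume "y \<in> Bset (Pm lev) (**) 0 (Suc t)"
    then have y: "y \<in> Pm lev" and h: "\<forall>s\<in>Pm lev. s ** y \<in> Bset (Pm lev) (**) 0 t" by auto
    have "lev k \<le> Suc t" if "y$k$q \<noteq> 0" for k q
    proof (rule ccontr)
      assume "\<not> lev k \<le> Suc t"
      obtain p0 where p0: "lev p0 = Suc t" using lev_surj Suc.prems by (metis le_add1 plus_1_eq_Suc)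
      have "Em p0 k \<in> Pm lev" using p0 \<open>\<not> lev k \<le> Suc t\<close> by (intro Em_Pm) simp
      then have "Em p0 k ** y \<in> Bset (Pm lev) (**) 0 t" using h by blast
      moreover have "(Em p0 k ** y)$p0$q \<noteq> 0" using that by (simp add: Em_mult_left)
      ultimately have "lev p0 \<le> t" using IH by blast
      then show False using p0 by simp
    qed
    then show "y \<in> {y \<in> Pm lev. \<forall>p q. y$p$q \<noteq> 0 \<longrightarrow> lev p \<le> Suc t}" using y by blast
  next
    fix y :: "'a^'n^'n" assume "y \<in> {y \<in> Pm lev. \<forall>p q. y$p$q \<noteq> 0 \<longrightarrow> lev p \<le> Suc t}"
    then have y: "y \<in> Pm lev" and h: "\<forall>p q. y$p$q \<noteq> 0 \<longrightarrow> lev p \<le> Suc t" by auto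
    have "s ** y \<in> Bset (Pm lev) (**) 0 t" if s: "s \<in> Pm lev" for s
    proof -
      have "lev p \<le> t" if h0: "(s ** y)$p$q \<noteq> 0" for p q
      proof -
        obtain k where "s$p$k \<noteq> 0" "y$k$q \<noteq> 0" using mult_nz[OF h0] by blast
        then have "lev p < lev k" "lev k \<le> Suc t" using s h by (auto simp: Pm_def)
        then show ?thesis by simp
      qed
      then show ?thesis using IH Pm_mult[OF s y] by blast
    qed
    then show "y \<in> Bset (Pm lev) (**) 0 (Suc t)" using y by simp
  qed
qed

lemma As_char: "t \<le> r \<Longrightarrow> Aset (Pm lev) (**) (0::'a::field^'n^'n) t =
   {x \<in> Pm lev. \<forall>p q. x$p$q \<noteq> 0 \<longrightarrow> r - t < lev q}"
proof (induction t)
  case 0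
  have "y = 0" if "y \<in> Pm lev" "\<forall>p q. y$p$q \<noteq> 0 \<longrightarrow> r - 0 < lev q" for y :: "'a^'n^'n"
  proof -
    have "\<forall>p q. y$p$q = 0" using that lev_le by (metis diff_zero not_le)
    then show ?thesis by (simp add: vec_eq_iff)
  qed
  then show ?case using Pm_0 by auto
next
  case (Suc t)
  then have IH: "Aset (Pm lev) (**) (0::'a::field^'n^'n) t = {x \<in> Pm lev. \<forall>p q. x$p$q \<noteq> 0 \<longrightarrow> r - t < lev q}"
    by simp
  show ?case
  proof (intro equalityI subsetI)
    fix x :: "'a^'n^'n" assume "x \<in> Aset (Pm lev) (**) 0 (Suc t)"
    then have x: "x \<in> Pm lev" and h: "\<forall>s\<in>Pm lev. x ** s \<in> Aset (Pm lev) (**) 0 t" by auto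
    have "r - Suc t < lev k" if "x$p$k \<noteq> 0" for p k
    proof (rule ccontr)
      assume nk: "\<not> r - Suc t < lev k"
      have "1 \<le> r - t" "r - t \<le> r" using Suc.prems by auto
      then obtain q0 where q0: "lev q0 = r - t" using lev_surj[of "r - t"] by blast
      have "Em k q0 \<in> Pm lev" using q0 nk Suc.prems by (intro Em_Pm) simp
      then have "x ** Em k q0 \<in> Aset (Pm lev) (**) 0 t" using h by blast
      moreover have "(x ** Em k q0)$p$q0 \<noteq> 0" using that by (simp add: Em_mult_right)
      ultimately have "r - t < lev q0" using IH by blast
      then show False using q0 by simp
    qed
    then show "x \<in> {x \<in> Pm lev. \<forall>p q. x$p$q \<noteq> 0 \<longrightarrow> r - Suc t < lev q}" using x by blast
  next
    fix x :: "'a^'n^'n" assume "x \<in> {x \<in> Pm lev. \<forall>p q. x$p$q \<noteq> 0 \<longrightarrow> r - Suc t < lev q}"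
    then have x: "x \<in> Pm lev" and h: "\<forall>p q. x$p$q \<noteq> 0 \<longrightarrow> r - Suc t < lev q" by auto
    have "x ** s \<in> Aset (Pm lev) (**) 0 t" if s: "s \<in> Pm lev" for s
    proof -
      have "r - t < lev q" if h0: "(x ** s)$p$q \<noteq> 0" for p q
      proof -
        obtain k where "x$p$k \<noteq> 0" "s$k$q \<noteq> 0" using mult_nz[OF h0] by blast
        then have "r - Suc t < lev k" "lev k < lev q" using s h by (auto simp: Pm_def)
        then show ?thesis using Suc.prems by linarith
      qed
      then show ?thesis using IH Pm_mult[OF x s] by blast
    qed
    then show "x \<in> Aset (Pm lev) (**) 0 (Suc t)" using x by simp
  qed
qed

end

(* ---- part C3 ---- *)

lemma subspace_ker: "vec.subspace {v. (A::'a::field^'n::finite^'m::finite) *v v = 0}"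
  unfolding vec.subspace_def by (auto simp: matrix_vector_right_distrib vector_scalar_commute)

lemma col_nz: "A \<noteq> 0 \<Longrightarrow> \<exists>q. column q (A::'a::field^'n::finite^'n) \<noteq> 0"
proof (rule ccontr)
  assume "A \<noteq> 0" "\<not> (\<exists>q. column q A \<noteq> 0)"
  then have "\<And>q. column q A = column q 0" by (simp add: column_def vec_eq_iff)
  then have "A = 0" by (rule mat_eq_columns)
  with \<open>A \<noteq> 0\<close> show False by simp
qed

lemma column_0[simp]: "column q (0::'a::field^'n::finite^'n) = 0"
  by (simp add: column_def vec_eq_iff)

context levs
begin

lemma biorth_upper:
  assumes t: "2 \<le> t" "t \<le> r - 1"
    and xy: "\<forall>i<k. x i \<in> Bset (Pm lev) (**) 0 t \<and> y i \<in> Aset (Pm lev) (**) 0 (r - t + 1)"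
    and bo: "\<forall>i<k. \<forall>j<k. (y i ** x j = (0::'a::field^'n^'n)) \<longleftrightarrow> i \<noteq> j"
  shows "k \<le> card {p. lev p = t}"
proof -
  have tr: "t \<le> r" "r - t + 1 \<le> r" using t r4 by auto
  have xB: "\<And>i. i < k \<Longrightarrow> \<forall>p q. x i$p$q \<noteq> 0 \<longrightarrow> lev p \<le> t"
    using xy Bs_char[OF tr(1)] by blast
  have yA0: "\<And>i. i < k \<Longrightarrow> \<forall>p q. y i$p$q \<noteq> 0 \<longrightarrow> r - (r - t + 1) < lev q"
    using xy As_char[OF tr(2)] by blast
  have yA: "\<And>i. i < k \<Longrightarrow> \<forall>p q. y i$p$q \<noteq> 0 \<longrightarrow> t \<le> lev q"
  proof -
    fix i assume "i < k"
    then have h: "\<forall>p q. y i$p$q \<noteq> 0 \<longrightarrow> r - (r - t + 1) < lev q" by (rule yA0)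
    have "r - (r - t + 1) = t - 1" using t by simp
    show "\<forall>p q. y i$p$q \<noteq> 0 \<longrightarrow> t \<le> lev q"
    proof (intro allI impI)
      fix p q assume "y i$p$q \<noteq> 0"
      then have "t - 1 < lev q" using h \<open>r - (r - t + 1) = t - 1\<close> by metis
      then show "t \<le> lev q" using t by linarith
    qed
  qed
  define pr :: "'a^'n \<Rightarrow> 'a^'n" where "pr v = (\<chi> p. if lev p = t then v$p else 0)" for v
  have key: "Y *v v = Y *v pr v" if Y: "\<forall>p q. Y$p$q \<noteq> 0 \<longrightarrow> t \<le> lev q"
     and v: "\<forall>p. v$p \<noteq> 0 \<longrightarrow> lev p \<le> t" for Y :: "'a^'n^'n" and v
  proof -
    have "Y$i$j * v$j = Y$i$j * pr v $ j" for i j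
    proof (cases "lev j = t")
      case True then show ?thesis by (simp add: pr_def)
    next
      case False
      show ?thesis
      proof (cases "Y$i$j = 0")
        case True then show ?thesis by simp
      next
        case F: False
        then have "t \<le> lev j" using Y by blast
        then have "v$j = 0" using v False by (meson le_antisym)
        then show ?thesis using False by (simp add: pr_def)
      qed
    qed
    then have "(\<Sum>j\<in>UNIV. Y$i$j * v$j) = (\<Sum>j\<in>UNIV. Y$i$j * pr v $ j)" for i
      by (intro sum.cong) auto
    then show ?thesis by (simp add: matrix_vector_mult_def vec_eq_iff)
  qed
  define qf where "qf i = (SOME q. column q (y i ** x i) \<noteq> 0)" for i
  have qf: "column (qf i) (y i ** x i) \<noteq> 0" if "i < k" for i
  proof -
    have "y i ** x i \<noteq> 0" using bo that by blast
    then have "\<exists>q. column q (y i ** x i) \<noteq> 0" by (rule col_nz)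
    then show ?thesis unfolding qf_def by (rule someI_ex)
  qed
  define u where "u i = pr (column (qf i) (x i))" for i
  have yu: "y j *v u i = column (qf i) (y j ** x i)" if "i < k" "j < k" for i j
  proof -
    have "\<forall>p. column (qf i) (x i) $ p \<noteq> 0 \<longrightarrow> lev p \<le> t"
      using xB[OF that(1)] unfolding column_def by (simp, blast)
    then have "y j *v u i = y j *v column (qf i) (x i)"
      unfolding u_def using key[OF yA[OF that(2)]] by simp
    then show ?thesis by (simp add: column_mult)
  qed
  have nz: "y i *v u i \<noteq> 0" if "i < k" for i using yu[OF that that] qf[OF that] by simp
  have zz: "y j *v u i = 0" if "i < k" "j < k" "i \<noteq> j" for i j
  proof -
    have "y j ** x i = 0" using bo that by blast
    then show ?thesis using yu[OF that(1,2)] by simp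
  qed
  have inj: "inj_on u {..<k}"
  proof (rule inj_onI)
    fix i j assume "i \<in> {..<k}" "j \<in> {..<k}" "u i = u j"
    then show "i = j" using nz zz by (metis lessThan_iff)
  qed
  define W where "W = u ` {..<k}"
  have indep: "vec.independent W"
    unfolding vec.dependent_def
  proof
    assume "\<exists>a\<in>W. a \<in> vec.span (W - {a})"
    then obtain i where i: "i < k" and sp: "u i \<in> vec.span (W - {u i})" unfolding W_def by blast
    have "W - {u i} \<subseteq> {v. y i *v v = 0}"
    proof
      fix b assume "b \<in> W - {u i}"
      then obtain j where "j < k" "b = u j" "u j \<noteq> u i" unfolding W_def by blast
      then show "b \<in> {v. y i *v v = 0}" using zz[of j i] i by auto
    qed
    then have "vec.span (W - {u i}) \<subseteq> {v. y i *v v = 0}"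
      by (rule vec.span_minimal[OF _ subspace_ker])
    then have "y i *v u i = 0" using sp by blast
    then show False using nz[OF i] by simp
  qed
  have sub: "W \<subseteq> {v. \<forall>i. i \<notin> {p. lev p = t} \<longrightarrow> v$i = 0}"
    unfolding W_def u_def pr_def by auto
  have "card W \<le> vec.dim {v::'a^'n. \<forall>i. i \<notin> {p. lev p = t} \<longrightarrow> v$i = 0}"
    by (rule vec.independent_card_le_dim[OF sub indep])
  also have "\<dots> = card {p. lev p = t}" by (rule dim_substandard_cart)
  finally show ?thesis using card_image[OF inj] unfolding W_def by simp
qed

lemma biorth_lower:
  assumes t: "2 \<le> t" "t \<le> r - 1" and k: "k \<le> card {p. lev p = t}"
  shows "biorth (**) (0::'a::field^'n^'n) (Bset (Pm lev) (**) 0 t) (Aset (Pm lev) (**) 0 (r - t + 1)) k"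
proof -
  have tr: "t \<le> r" "r - t + 1 \<le> r" using t r4 by auto
  obtain T where T: "T \<subseteq> {p. lev p = t}" "card T = k" "finite T"
    using obtain_subset_with_card_n[OF k] by blast
  obtain h where h: "bij_betw h {0..<k} T" using ex_bij_betw_nat_finite[OF T(3)] T(2) by auto
  have hT: "i < k \<Longrightarrow> lev (h i) = t" for i
  proof -
    assume "i < k"
    then have "h i \<in> T" using bij_betw_apply[OF h] by simp
    then show ?thesis using T(1) by blast
  qed
  have hinj: "i < k \<Longrightarrow> j < k \<Longrightarrow> h i = h j \<longleftrightarrow> i = j" for i j
    using h by (auto simp: bij_betw_def inj_on_def)
  obtain a0 where a0: "lev a0 = 1" using lev_surj[of 1] r4 by auto
  obtain c0 where c0: "lev c0 = r" using lev_surj[of r] r4 by auto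
  define x where "x i = (Em (h i) c0 :: 'a^'n^'n)" for i
  define y where "y i = (Em a0 (h i) :: 'a^'n^'n)" for i
  have 1: "\<forall>i<k. x i \<in> Bset (Pm lev) (**) 0 t \<and> y i \<in> Aset (Pm lev) (**) 0 (r - t + 1)"
  proof (intro allI impI conjI)
    fix i assume i: "i < k"
    have "x i \<in> Pm lev" unfolding x_def using hT[OF i] c0 t by (intro Em_Pm) simp
    moreover have "\<forall>p q. x i$p$q \<noteq> 0 \<longrightarrow> lev p \<le> t" unfolding x_def using hT[OF i] by simp
    ultimately show "x i \<in> Bset (Pm lev) (**) 0 t" using Bs_char[OF tr(1)] by blast
    have "y i \<in> Pm lev" unfolding y_def using hT[OF i] a0 t by (intro Em_Pm) simp
    moreover have "\<forall>p q. y i$p$q \<noteq> 0 \<longrightarrow> r - (r - t + 1) < lev q" unfolding y_def using hT[OF i] t by simp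
    ultimately show "y i \<in> Aset (Pm lev) (**) 0 (r - t + 1)" using As_char[OF tr(2)] by blast
  qed
  have 2: "\<forall>i<k. \<forall>j<k. (y i ** x j = 0) \<longleftrightarrow> i \<noteq> j"
  proof (intro allI impI)
    fix i j assume "i < k" "j < k"
    moreover have "Em a0 c0 \<noteq> (0::'a^'n^'n)" by (rule Em_nz)
    ultimately show "(y i ** x j = 0) \<longleftrightarrow> i \<noteq> j"
      unfolding x_def y_def using hinj by (simp add: Em_Em)
  qed
  show ?thesis unfolding biorth_def
    by (rule exI[of _ x], rule exI[of _ y]) (use 1 2 in blast)
qed

lemma biorth_char:
  assumes t: "2 \<le> t" "t \<le> r - 1"
  shows "biorth (**) (0::'a::field^'n^'n) (Bset (Pm lev) (**) 0 t) (Aset (Pm lev) (**) 0 (r - t + 1)) k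
    \<longleftrightarrow> k \<le> card {p. lev p = t}"
proof
  assume "biorth (**) (0::'a::field^'n^'n) (Bset (Pm lev) (**) 0 t) (Aset (Pm lev) (**) 0 (r - t + 1)) k"
  then obtain x y where xy: "\<forall>i<k. x i \<in> Bset (Pm lev) (**) (0::'a::field^'n^'n) t \<and> y i \<in> Aset (Pm lev) (**) 0 (r - t + 1)"
    and bo: "\<forall>i<k. \<forall>j<k. (y i ** x j = 0) \<longleftrightarrow> i \<noteq> j" unfolding biorth_def by blast
  show "k \<le> card {p. lev p = t}" by (rule biorth_upper[OF t xy bo])
qed (rule biorth_lower[OF t])

end

(* ---- part C4 ---- *)

lemma Std_mono: "j \<le> j' \<Longrightarrow> Std lev j \<subseteq> Std lev j'"
  unfolding Std_def by auto

context levs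
begin

definition Img :: "'a::field^'n^'n \<Rightarrow> ('a^'n) set" where
  "Img x = (\<lambda>v. x *v v) ` Std lev (r - 1)"

lemma Img_subspace: "vec.subspace (Img x)"
  unfolding Img_def by (intro subspace_img subspace_Std)

lemma Img_0: "Img (0::'a::field^'n^'n) = {0}"
proof -
  have "(0::'a^'n) \<in> Std lev (r - 1)" by (simp add: Std_def)
  then show ?thesis unfolding Img_def by auto
qed

lemma Img_B1: "\<forall>p q. x$p$q \<noteq> 0 \<longrightarrow> lev p \<le> 1 \<Longrightarrow> Img (x::'a::field^'n^'n) \<subseteq> Std lev 1"
proof
  fix u assume h: "\<forall>p q. x$p$q \<noteq> 0 \<longrightarrow> lev p \<le> 1" and "u \<in> Img x"
  then obtain v where u: "u = x *v v" unfolding Img_def by blast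
  show "u \<in> Std lev 1" unfolding Std_def
  proof (intro CollectI allI impI)
    fix p assume "u $ p \<noteq> 0"
    then obtain k where "x$p$k \<noteq> 0" using mv_nz u by blast
    then show "lev p \<le> 1" using h by blast
  qed
qed

lemma A2_kill:
  assumes x: "\<forall>p q. x$p$q \<noteq> 0 \<longrightarrow> r - 2 < lev q" and v: "v \<in> Std lev (r - 2)"
  shows "(x::'a::field^'n^'n) *v v = 0"
proof (rule ccontr)
  assume "x *v v \<noteq> 0"
  then obtain p where "(x *v v)$p \<noteq> 0" by (metis vec_eq_iff zero_index)
  then obtain k where "x$p$k \<noteq> 0" "v$k \<noteq> 0" using mv_nz by blast
  then show False using x v unfolding Std_def by fastforce
qed

lemma Pm_col: "s \<in> Pm lev \<Longrightarrow> column q s \<in> Std lev (lev q - 1)"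
  using Pm_columns[of lev s] lev_ge1 by blast

lemma Pm_of_cols: "(\<And>q. c q \<in> Std lev (lev q - 1)) \<Longrightarrow> mkm c \<in> Pm lev"
  using Pm_columns[of lev "mkm c"] lev_ge1 by simp

lemma rid_sub_c:
  assumes x: "x \<in> Pm lev" "\<forall>p q. x$p$q \<noteq> 0 \<longrightarrow> r - 2 < lev q" and w: "w \<in> Pm lev"
  shows "rid (Pm lev) (**) x \<subseteq> rid (Pm lev) (**) w \<longleftrightarrow> Img x \<subseteq> Img (w::'a::field^'n^'n)"
proof
  assume h: "rid (Pm lev) (**) x \<subseteq> rid (Pm lev) (**) w"
  show "Img x \<subseteq> Img w"
  proof
    fix u assume "u \<in> Img x"
    then obtain v where v: "v \<in> Std lev (r - 1)" "u = x *v v" unfolding Img_def by blast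
    obtain q0 where q0: "lev q0 = r" using lev_surj[of r] r4 by auto
    have "colm q0 v \<in> Pm lev" unfolding Pm_def
    proof (intro CollectI allI impI)
      fix i j assume "colm q0 v $ i $ j \<noteq> 0"
      then have "j = q0" "v$i \<noteq> 0" by (auto split: if_splits)
      then show "lev i < lev j" using v(1) q0 r4 unfolding Std_def by fastforce
    qed
    then have "x ** colm q0 v \<in> rid (Pm lev) (**) x" unfolding rid_def by blast
    then obtain s' where s': "s' \<in> Pm lev" "x ** colm q0 v = w ** s'" using h unfolding rid_def by blast
    have "column q0 (colm q0 v) = v" by (simp add: column_def vec_eq_iff)
    then have "u = column q0 (w ** s')" using s'(2) v(2) by (metis column_mult)
    also have "\<dots> = w *v column q0 s'" by (rule column_mult)
    finally show "u \<in> Img w" unfolding Img_def using Pm_col[OF s'(1), of q0] q0 by auto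
  qed
next
  assume h: "Img x \<subseteq> Img w"
  show "rid (Pm lev) (**) x \<subseteq> rid (Pm lev) (**) w"
  proof
    fix m assume "m \<in> rid (Pm lev) (**) x"
    then obtain s where s: "s \<in> Pm lev" "m = x ** s" unfolding rid_def by blast
    have ex: "\<exists>v. v \<in> Std lev (lev q - 1) \<and> w *v v = column q m" for q
    proof (cases "lev q = r")
      case True
      have "column q m = x *v column q s" using s(2) by (simp add: column_mult)
      moreover have "column q s \<in> Std lev (r - 1)" using Pm_col[OF s(1), of q] True by simp
      ultimately have "column q m \<in> Img w" using h unfolding Img_def by blast
      then show ?thesis using True unfolding Img_def by auto
    next
      case False
      then have "lev q - 1 \<le> r - 2" using lev_le[of q] by linarith
      then have "column q s \<in> Std lev (r - 2)" using Pm_col[OF s(1), of q] Std_mono by blast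
      then have "column q m = 0" using A2_kill[OF x(2)] s(2) by (simp add: column_mult)
      moreover have "(0::'a^'n) \<in> Std lev (lev q - 1)" by (simp add: Std_def)
      ultimately show ?thesis by (intro exI[of _ 0]) simp
    qed
    define c where "c q = (SOME v. v \<in> Std lev (lev q - 1) \<and> w *v v = column q m)" for q
    have c: "c q \<in> Std lev (lev q - 1) \<and> w *v c q = column q m" for q
      unfolding c_def by (rule someI_ex[OF ex])
    have "mkm c \<in> Pm lev" using c by (intro Pm_of_cols) blast
    moreover have "w ** mkm c = m"
      by (rule mat_eq_columns) (simp add: column_mult c)
    ultimately show "m \<in> rid (Pm lev) (**) w" unfolding rid_def by (metis image_eqI)
  qed
qed

lemma X_char: "x \<in> Xset (Pm lev) (**) (0::'a::field^'n^'n) \<longleftrightarrow>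
   x \<in> Pm lev \<and> (\<forall>p q. x$p$q \<noteq> 0 \<longrightarrow> lev p \<le> 1) \<and> (\<forall>p q. x$p$q \<noteq> 0 \<longrightarrow> r - 2 < lev q)"
proof -
  have "(1::nat) \<le> r" "(2::nat) \<le> r" using r4 by auto
  then show ?thesis unfolding Xset_def using Bs_char[of 1] As_char[of 2] by auto
qed

lemma rid_sub_X: "x \<in> Xset (Pm lev) (**) 0 \<Longrightarrow> y \<in> Xset (Pm lev) (**) 0 \<Longrightarrow>
  rid (Pm lev) (**) x \<subseteq> rid (Pm lev) (**) y \<longleftrightarrow> Img x \<subseteq> Img (y::'a::field^'n^'n)"
  using rid_sub_c X_char by blast

lemma rid_eq_X: "x \<in> Xset (Pm lev) (**) 0 \<Longrightarrow> y \<in> Xset (Pm lev) (**) 0 \<Longrightarrow>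
  rid (Pm lev) (**) x = rid (Pm lev) (**) y \<longleftrightarrow> Img x = Img (y::'a::field^'n^'n)"
  using rid_sub_X by blast

lemma zero_X: "(0::'a::field^'n^'n) \<in> Xset (Pm lev) (**) 0"
  by (simp add: X_char Pm_0)

lemma Pt_eq: "x \<in> Pt (Pm lev) (**) (0::'a::field^'n^'n) \<longleftrightarrow> x \<in> Xset (Pm lev) (**) 0 \<and> Img x \<noteq> {0} \<and>
   (\<forall>y\<in>Xset (Pm lev) (**) 0. Img y \<subseteq> Img x \<longrightarrow> Img y = {0} \<or> Img y = Img x)"
proof -
  have e: "rid (Pm lev) (**) y = rid (Pm lev) (**) 0 \<longleftrightarrow> Img y = {0}"
    if y: "y \<in> Xset (Pm lev) (**) (0::'a::field^'n^'n)" for y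
  proof -
    have "rid (Pm lev) (**) y = rid (Pm lev) (**) 0 \<longleftrightarrow> Img y = Img (0::'a^'n^'n)"
      by (rule rid_eq_X[OF y zero_X])
    then show ?thesis by (simp add: Img_0)
  qed
  show ?thesis
  proof (cases "x \<in> Xset (Pm lev) (**) (0::'a::field^'n^'n)")
    case False
    then show ?thesis by (simp add: Pt_def)
  next
    case True
    have 1: "rid (Pm lev) (**) x \<noteq> rid (Pm lev) (**) 0 \<longleftrightarrow> Img x \<noteq> {0}"
      using e[OF True] by simp
    have 2: "(rid (Pm lev) (**) y \<subseteq> rid (Pm lev) (**) x \<longrightarrow>
        rid (Pm lev) (**) y = rid (Pm lev) (**) 0 \<or> rid (Pm lev) (**) y = rid (Pm lev) (**) x) \<longleftrightarrow>
        (Img y \<subseteq> Img x \<longrightarrow> Img y = {0} \<or> Img y = Img x)"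
      if y: "y \<in> Xset (Pm lev) (**) 0" for y
      using rid_sub_X[OF y True] rid_eq_X[OF y True] e[OF y] by simp
    have 3: "(\<forall>y\<in>Xset (Pm lev) (**) 0. rid (Pm lev) (**) y \<subseteq> rid (Pm lev) (**) x \<longrightarrow>
        rid (Pm lev) (**) y = rid (Pm lev) (**) 0 \<or> rid (Pm lev) (**) y = rid (Pm lev) (**) x) \<longleftrightarrow>
        (\<forall>y\<in>Xset (Pm lev) (**) 0. Img y \<subseteq> Img x \<longrightarrow> Img y = {0} \<or> Img y = Img x)"
      by (rule ball_cong[OF refl 2])
    show ?thesis unfolding Pt_def mem_Collect_eq using True 1 3 by simp
  qed
qed

lemma mkpt:
  assumes a: "a \<in> Std lev 1" and q1: "lev q1 = r - 1"
  shows "colm q1 a \<in> Xset (Pm lev) (**) (0::'a::field^'n^'n)" "Img (colm q1 a) = vec.span {a}"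
proof -
  have "colm q1 a \<in> Pm lev" unfolding Pm_def
  proof (intro CollectI allI impI)
    fix i j assume "colm q1 a $ i $ j \<noteq> 0"
    then have "j = q1" "a$i \<noteq> 0" by (auto split: if_splits)
    then show "lev i < lev j" using a q1 r4 unfolding Std_def by fastforce
  qed
  moreover have "\<forall>p q. colm q1 a $ p $ q \<noteq> 0 \<longrightarrow> lev p \<le> 1" using a unfolding Std_def by auto
  moreover have "\<forall>p q. colm q1 a $ p $ q \<noteq> 0 \<longrightarrow> r - 2 < lev q" using q1 r4 by auto
  ultimately show "colm q1 a \<in> Xset (Pm lev) (**) (0::'a::field^'n^'n)" using X_char by blast
  show "Img (colm q1 a) = vec.span {a}"
  proof
    show "Img (colm q1 a) \<subseteq> vec.span {a}"
      unfolding Img_def vec.span_singleton by (auto simp: colm_mv)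
    show "vec.span {a} \<subseteq> Img (colm q1 a)"
    proof
      fix u assume "u \<in> vec.span {a}"
      then obtain k where k: "u = k *s a" unfolding vec.span_singleton by blast
      define v where "v = (\<chi> j. if j = q1 then k else (0::'a))"
      have "v \<in> Std lev (r - 1)" unfolding Std_def v_def using q1 by auto
      moreover have "u = colm q1 a *v v" using k by (simp add: colm_mv v_def)
      ultimately show "u \<in> Img (colm q1 a)" unfolding Img_def by blast
    qed
  qed
qed

lemma Pt_char: "x \<in> Pt (Pm lev) (**) (0::'a::field^'n^'n) \<longleftrightarrow>
   x \<in> Xset (Pm lev) (**) 0 \<and> (\<exists>a. a \<noteq> 0 \<and> Img x = vec.span {a})"
proof
  assume h: "x \<in> Pt (Pm lev) (**) (0::'a::field^'n^'n)"
  then have xX: "x \<in> Xset (Pm lev) (**) 0" and nz: "Img x \<noteq> {0}"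
    and mn: "\<forall>y\<in>Xset (Pm lev) (**) 0. Img y \<subseteq> Img x \<longrightarrow> Img y = {0} \<or> Img y = Img x"
    using Pt_eq by auto
  have "\<exists>a. a \<in> Img x \<and> a \<noteq> 0"
  proof (rule ccontr)
    assume "\<not> (\<exists>a. a \<in> Img x \<and> a \<noteq> 0)"
    then have "Img x \<subseteq> {0}" by blast
    then show False using nz vec.subspace_0[OF Img_subspace[of x]] by blast
  qed
  then obtain a where a: "a \<in> Img x" "a \<noteq> 0" by blast
  have "1 \<le> r - 1" "r - 1 \<le> r" using r4 by auto
  then obtain q1 where q1: "lev q1 = r - 1" using lev_surj[of "r - 1"] by blast
  have "\<forall>p q. x$p$q \<noteq> 0 \<longrightarrow> lev p \<le> 1" using xX by (simp add: X_char)
  then have aS: "a \<in> Std lev 1" using Img_B1 a(1) by blast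
  have i1: "Img (colm q1 a) = vec.span {a}" using mkpt[OF aS q1] by blast
  have i2: "vec.span {a} \<subseteq> Img x"
    using a(1) by (intro vec.span_minimal Img_subspace) simp
  have i3: "vec.span {a} \<noteq> {0}" using a(2) vec.span_base[of a "{a}"] by auto
  have "Img (colm q1 a) = {0} \<or> Img (colm q1 a) = Img x"
    using mn mkpt(1)[OF aS q1] i1 i2 by blast
  then have "Img x = vec.span {a}" using i1 i3 by auto
  then show "x \<in> Xset (Pm lev) (**) 0 \<and> (\<exists>a. a \<noteq> 0 \<and> Img x = vec.span {a})" using xX a(2) by blast
next
  assume "x \<in> Xset (Pm lev) (**) 0 \<and> (\<exists>a. a \<noteq> 0 \<and> Img x = vec.span {a})"
  then obtain a where xX: "x \<in> Xset (Pm lev) (**) 0" and a: "a \<noteq> 0" "Img x = vec.span {a}" by blast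
  have "Img x \<noteq> {0}" using a vec.span_base[of a "{a}"] by auto
  moreover have "Img y = {0} \<or> Img y = Img x" if "Img y \<subseteq> Img x" for y
  proof (cases "Img y = {0}")
    case False
    have "\<exists>b. b \<in> Img y \<and> b \<noteq> 0"
    proof (rule ccontr)
      assume "\<not> (\<exists>b. b \<in> Img y \<and> b \<noteq> 0)"
      then have "Img y \<subseteq> {0}" by blast
      then show False using False vec.subspace_0[OF Img_subspace[of y]] by blast
    qed
    then obtain b where b: "b \<in> Img y" "b \<noteq> 0" by blast
    have "b \<in> vec.span {a}" using that a(2) b(1) by blast
    then obtain c where c: "b = c *s a" unfolding vec.span_singleton by blast
    then have "c \<noteq> 0" using b(2) by auto
    then have "a = inverse c *s b" using c by simp
    then have "a \<in> Img y" using vec.subspace_scale[OF Img_subspace b(1)] by simp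
    then have "vec.span {a} \<subseteq> Img y" by (intro vec.span_minimal Img_subspace) simp
    then show ?thesis using that a(2) by blast
  qed simp
  ultimately show "x \<in> Pt (Pm lev) (**) (0::'a::field^'n^'n)" using Pt_eq xX by blast
qed

end

(* ---- part C5 ---- *)

context levs
begin

lemma Pt_X: "x \<in> Pt (Pm lev) (**) (0::'a::field^'n^'n) \<Longrightarrow> x \<in> Xset (Pm lev) (**) 0"
  by (simp add: Pt_def)

lemma X_Pm: "x \<in> Xset (Pm lev) (**) (0::'a::field^'n^'n) \<Longrightarrow> x \<in> Pm lev"
  by (simp add: X_char)

lemma B1_char: "w \<in> Bset (Pm lev) (**) (0::'a::field^'n^'n) 1 \<longleftrightarrow>
   w \<in> Pm lev \<and> (\<forall>p q. w$p$q \<noteq> 0 \<longrightarrow> lev p \<le> 1)"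
proof -
  have "(1::nat) \<le> r" using r4 by auto
  then show ?thesis using Bs_char[of 1] by auto
qed

lemma X_Std1: "x \<in> Xset (Pm lev) (**) (0::'a::field^'n^'n) \<Longrightarrow> Img x \<subseteq> Std lev 1"
proof -
  assume "x \<in> Xset (Pm lev) (**) (0::'a::field^'n^'n)"
  then have "\<forall>p q. x$p$q \<noteq> 0 \<longrightarrow> lev p \<le> 1" by (simp add: X_char)
  then show ?thesis by (rule Img_B1)
qed

lemma sp2_char:
  assumes y: "y \<in> Pt (Pm lev) (**) (0::'a::field^'n^'n)" "Img y = vec.span {b}"
    and y': "y' \<in> Pt (Pm lev) (**) (0::'a::field^'n^'n)" "Img y' = vec.span {b'}"
  shows "sp2 (Pm lev) (**) 0 y y' x \<longleftrightarrow> x \<in> Pt (Pm lev) (**) 0 \<and> Img x \<subseteq> vec.span {b, b'}"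
proof
  assume h: "sp2 (Pm lev) (**) 0 y y' x"
  then have xP: "x \<in> Pt (Pm lev) (**) 0" and
    hw: "\<forall>w\<in>Bset (Pm lev) (**) 0 1. rid (Pm lev) (**) y \<subseteq> rid (Pm lev) (**) w \<longrightarrow>
       rid (Pm lev) (**) y' \<subseteq> rid (Pm lev) (**) w \<longrightarrow> rid (Pm lev) (**) x \<subseteq> rid (Pm lev) (**) w"
    unfolding sp2_def by auto
  have bS: "b \<in> Std lev 1" using X_Std1[OF Pt_X[OF y(1)]] y(2) vec.span_base[of b "{b}"] by blast
  have b'S: "b' \<in> Std lev 1" using X_Std1[OF Pt_X[OF y'(1)]] y'(2) vec.span_base[of b' "{b'}"] by blast
  obtain p2 where p2: "lev p2 = 2" using lev_surj[of 2] r4 by auto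
  obtain p3 where p3: "lev p3 = 3" using lev_surj[of 3] r4 by auto
  have p23: "p2 \<noteq> p3" using p2 p3 by auto
  define w where "w = colm p2 b + colm p3 b'"
  have wmv: "w *v v = v$p2 *s b + v$p3 *s b'" for v
    unfolding w_def by (simp add: matrix_vector_mult_add_rdistrib colm_mv)
  have wnz: "w$i$j \<noteq> 0 \<Longrightarrow> lev i \<le> 1 \<and> 1 < lev j" for i j
  proof -
    assume "w$i$j \<noteq> 0"
    then have "(j = p2 \<and> b$i \<noteq> 0) \<or> (j = p3 \<and> b'$i \<noteq> 0)"
      unfolding w_def by (auto split: if_splits)
    then show ?thesis using bS b'S p2 p3 unfolding Std_def by auto
  qed
  have wP: "w \<in> Pm lev" unfolding Pm_def using wnz by fastforce
  have wB: "w \<in> Bset (Pm lev) (**) 0 1" using B1_char wP wnz by blast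
  have sub1: "vec.span {b} \<subseteq> Img w"
  proof
    fix u assume "u \<in> vec.span {b}"
    then obtain k where k: "u = k *s b" unfolding vec.span_singleton by blast
    define v where "v = (\<chi> j. if j = p2 then k else (0::'a))"
    have "v \<in> Std lev (r - 1)" unfolding Std_def v_def using p2 r4 by auto
    moreover have "u = w *v v" using k p23 by (simp add: wmv v_def)
    ultimately show "u \<in> Img w" unfolding Img_def by blast
  qed
  have sub2: "vec.span {b'} \<subseteq> Img w"
  proof
    fix u assume "u \<in> vec.span {b'}"
    then obtain k where k: "u = k *s b'" unfolding vec.span_singleton by blast
    define v where "v = (\<chi> j. if j = p3 then k else (0::'a))"
    have "v \<in> Std lev (r - 1)" unfolding Std_def v_def using p3 r4 by auto
    moreover have "u = w *v v" using k p23 by (simp add: wmv v_def)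
    ultimately show "u \<in> Img w" unfolding Img_def by blast
  qed
  have xX: "x \<in> Xset (Pm lev) (**) 0" by (rule Pt_X[OF xP])
  have yX: "y \<in> Xset (Pm lev) (**) 0" by (rule Pt_X[OF y(1)])
  have y'X: "y' \<in> Xset (Pm lev) (**) 0" by (rule Pt_X[OF y'(1)])
  have A2: "\<And>z. z \<in> Xset (Pm lev) (**) (0::'a^'n^'n) \<Longrightarrow> z \<in> Pm lev \<and> (\<forall>p q. z$p$q \<noteq> 0 \<longrightarrow> r - 2 < lev q)"
    by (simp add: X_char)
  have "rid (Pm lev) (**) y \<subseteq> rid (Pm lev) (**) w"
    using rid_sub_c[of y w] A2[OF yX] wP sub1 y(2) by blast
  moreover have "rid (Pm lev) (**) y' \<subseteq> rid (Pm lev) (**) w"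
    using rid_sub_c[of y' w] A2[OF y'X] wP sub2 y'(2) by blast
  ultimately have "rid (Pm lev) (**) x \<subseteq> rid (Pm lev) (**) w" using hw wB by blast
  then have "Img x \<subseteq> Img w" using rid_sub_c[of x w] A2[OF xX] wP by blast
  also have "Img w \<subseteq> vec.span {b, b'}"
  proof
    fix u assume "u \<in> Img w"
    then obtain v where "u = w *v v" unfolding Img_def by blast
    then have "u = v$p2 *s b + v$p3 *s b'" by (simp add: wmv)
    then show "u \<in> vec.span {b, b'}"
      by (simp add: vec.span_add vec.span_scale vec.span_base)
  qed
  finally show "x \<in> Pt (Pm lev) (**) 0 \<and> Img x \<subseteq> vec.span {b, b'}" using xP by blast
next
  assume h: "x \<in> Pt (Pm lev) (**) 0 \<and> Img x \<subseteq> vec.span {b, b'}"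
  have xX: "x \<in> Xset (Pm lev) (**) 0" using Pt_X h by blast
  have yX: "y \<in> Xset (Pm lev) (**) 0" by (rule Pt_X[OF y(1)])
  have y'X: "y' \<in> Xset (Pm lev) (**) 0" by (rule Pt_X[OF y'(1)])
  have A2: "\<And>z. z \<in> Xset (Pm lev) (**) (0::'a^'n^'n) \<Longrightarrow> z \<in> Pm lev \<and> (\<forall>p q. z$p$q \<noteq> 0 \<longrightarrow> r - 2 < lev q)"
    by (simp add: X_char)
  have "rid (Pm lev) (**) x \<subseteq> rid (Pm lev) (**) w"
    if w: "w \<in> Bset (Pm lev) (**) 0 1" and r1: "rid (Pm lev) (**) y \<subseteq> rid (Pm lev) (**) w"
      and r2: "rid (Pm lev) (**) y' \<subseteq> rid (Pm lev) (**) w" for w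
  proof -
    have wP: "w \<in> Pm lev" using w B1_char by blast
    have "Img y \<subseteq> Img w" using rid_sub_c[of y w] A2[OF yX] wP r1 by blast
    then have "b \<in> Img w" using y(2) vec.span_base[of b "{b}"] by blast
    have "Img y' \<subseteq> Img w" using rid_sub_c[of y' w] A2[OF y'X] wP r2 by blast
    then have "b' \<in> Img w" using y'(2) vec.span_base[of b' "{b'}"] by blast
    have "vec.span {b, b'} \<subseteq> Img w"
      using \<open>b \<in> Img w\<close> \<open>b' \<in> Img w\<close> by (intro vec.span_minimal Img_subspace) simp
    then have "Img x \<subseteq> Img w" using h by blast
    then show ?thesis using rid_sub_c[of x w] A2[OF xX] wP by blast
  qed
  then show "sp2 (Pm lev) (**) 0 y y' x" unfolding sp2_def using h by blast
qed

definition pv :: "'a::field^'n^'n \<Rightarrow> 'a^'n" where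
  "pv x = (SOME a. a \<noteq> 0 \<and> Img x = vec.span {a})"

lemma pv: "x \<in> Pt (Pm lev) (**) (0::'a::field^'n^'n) \<Longrightarrow> pv x \<noteq> 0 \<and> Img x = vec.span {pv x}"
proof -
  assume "x \<in> Pt (Pm lev) (**) (0::'a::field^'n^'n)"
  then have "\<exists>a. a \<noteq> 0 \<and> Img x = vec.span {a}" using Pt_char by blast
  then show ?thesis unfolding pv_def by (rule someI_ex)
qed

lemma pv_Std: "x \<in> Pt (Pm lev) (**) (0::'a::field^'n^'n) \<Longrightarrow> pv x \<in> Std lev 1"
proof -
  assume x: "x \<in> Pt (Pm lev) (**) (0::'a::field^'n^'n)"
  have "pv x \<in> vec.span {pv x}" by (rule vec.span_base) simp
  then have "pv x \<in> Img x" using pv[OF x] by simp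
  then show ?thesis using X_Std1[OF Pt_X[OF x]] by blast
qed

lemma pv_in: "x \<in> Pt (Pm lev) (**) (0::'a::field^'n^'n) \<Longrightarrow> pv x \<in> Img x"
proof -
  assume x: "x \<in> Pt (Pm lev) (**) (0::'a::field^'n^'n)"
  have "pv x \<in> vec.span {pv x}" by (rule vec.span_base) simp
  then show "pv x \<in> Img x" using pv[OF x] by simp
qed

lemma cl_sub: assumes G: "G \<subseteq> Pt (Pm lev) (**) (0::'a::field^'n^'n)"
  and x: "x \<in> cl (Pm lev) (**) 0 G" shows "pv x \<in> vec.span (pv ` G)"
  using x
proof (induction rule: cl.induct)
  case (base x)
  then show ?case by (simp add: vec.span_base)
next
  case (step y y' x)
  have yP: "y \<in> Pt (Pm lev) (**) 0" by (rule cl_Pt[OF step.hyps(1)])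
  have y'P: "y' \<in> Pt (Pm lev) (**) 0" by (rule cl_Pt[OF step.hyps(2)])
  have h: "x \<in> Pt (Pm lev) (**) 0 \<and> Img x \<subseteq> vec.span {pv y, pv y'}"
    using sp2_char[OF yP conjunct2[OF pv[OF yP]] y'P conjunct2[OF pv[OF y'P]]] step.hyps(3) by blast
  then have "pv x \<in> Img x" using pv_in by blast
  then have "pv x \<in> vec.span {pv y, pv y'}" using h by blast
  moreover have "vec.span {pv y, pv y'} \<subseteq> vec.span (pv ` G)"
    using step.IH by (intro vec.span_minimal) auto
  ultimately show ?case by blast
qed

lemma cl_sup:
  assumes G: "G \<subseteq> Pt (Pm lev) (**) (0::'a::field^'n^'n)"
  shows "v \<in> vec.span (pv ` G) \<Longrightarrow> v \<noteq> 0 \<Longrightarrow> x \<in> Pt (Pm lev) (**) 0 \<Longrightarrow> Img x = vec.span {v} \<Longrightarrow>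
      x \<in> cl (Pm lev) (**) 0 G"
proof (induction v arbitrary: x rule: vec.span_induct_alt)
  case base
  then show ?case by simp
next
  case (step c b v x)
  obtain g where g: "g \<in> G" "b = pv g" using step.hyps(1) by blast
  have gP: "g \<in> Pt (Pm lev) (**) 0" using g(1) G by blast
  have gcl: "g \<in> cl (Pm lev) (**) 0 G" using g(1) gP by (rule cl.base)
  have "pv x \<in> Img x" by (rule pv_in[OF step.prems(2)])
  then have pvx: "pv x \<in> vec.span {c *s b + v}" using step.prems(3) by simp
  show ?case
  proof (cases "v = 0")
    case True
    have "c *s b + v \<in> vec.span {pv g, pv g}"
      using True g(2) by (simp add: vec.span_scale vec.span_base)
    then have "vec.span {c *s b + v} \<subseteq> vec.span {pv g, pv g}"
      by (intro vec.span_minimal) auto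
    then have "Img x \<subseteq> vec.span {pv g, pv g}" using step.prems(3) by simp
    then have "sp2 (Pm lev) (**) 0 g g x"
      using sp2_char[OF gP conjunct2[OF pv[OF gP]] gP conjunct2[OF pv[OF gP]]] step.prems(2) by blast
    then show ?thesis by (rule cl.step[OF gcl gcl])
  next
    case False
    have v'S: "c *s b + v \<in> Std lev 1"
    proof -
      have "c *s b + v \<in> vec.span {c *s b + v}" by (rule vec.span_base) simp
      then have "c *s b + v \<in> Img x" using step.prems(3) by simp
      then show ?thesis using X_Std1[OF Pt_X[OF step.prems(2)]] by blast
    qed
    have bS: "b \<in> Std lev 1" using pv_Std[OF gP] g(2) by simp
    have "(c *s b + v) + (- c) *s b \<in> Std lev 1"
      by (rule vec.subspace_add[OF subspace_Std v'S vec.subspace_scale[OF subspace_Std bS]])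
    moreover have "(c *s b + v) + (- c) *s b = v" by (simp add: vec_eq_iff algebra_simps)
    ultimately have vS: "v \<in> Std lev 1" by simp
    have "1 \<le> r - 1" "r - 1 \<le> r" using r4 by auto
    then obtain q1 where q1: "lev q1 = r - 1" using lev_surj[of "r - 1"] by blast
    define x' where "x' = (colm q1 v :: 'a^'n^'n)"
    have x'X: "x' \<in> Xset (Pm lev) (**) 0" unfolding x'_def by (rule mkpt(1)[OF vS q1])
    have x'I: "Img x' = vec.span {v}" unfolding x'_def by (rule mkpt(2)[OF vS q1])
    have x'P: "x' \<in> Pt (Pm lev) (**) 0" using x'X x'I False Pt_char by blast
    have x'cl: "x' \<in> cl (Pm lev) (**) 0 G" by (rule step.IH[OF False x'P x'I])
    have "v \<in> vec.span {v}" by (rule vec.span_base) simp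
    then have "v \<in> vec.span {pv x'}" using pv[OF x'P] x'I by simp
    then have v2: "v \<in> vec.span {pv x', pv g}"
      using vec.span_mono[of "{pv x'}" "{pv x', pv g}"] by blast
    have b2: "b \<in> vec.span {pv x', pv g}" using g(2) by (simp add: vec.span_base)
    have "c *s b + v \<in> vec.span {pv x', pv g}"
      by (rule vec.span_add[OF vec.span_scale[OF b2] v2])
    then have "vec.span {c *s b + v} \<subseteq> vec.span {pv x', pv g}"
      by (intro vec.span_minimal) auto
    then have "Img x \<subseteq> vec.span {pv x', pv g}" using step.prems(3) by simp
    then have "sp2 (Pm lev) (**) 0 x' g x"
      using sp2_char[OF x'P conjunct2[OF pv[OF x'P]] gP conjunct2[OF pv[OF gP]]] step.prems(2) by blast
    then show ?thesis by (rule cl.step[OF x'cl gcl])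
  qed
qed

end

(* ---- part C6 ---- *)

context levs
begin

lemma indep_upper:
  assumes xP: "\<forall>i<k. x i \<in> Pt (Pm lev) (**) (0::'a::field^'n^'n)"
    and xn: "\<forall>i<k. x i \<notin> cl (Pm lev) (**) 0 (x ` ({..<k} - {i}))"
  shows "k \<le> card {p. lev p = 1}"
proof -
  define u where "u i = pv (x i)" for i
  have Gi: "x ` ({..<k} - {i}) \<subseteq> Pt (Pm lev) (**) 0" for i using xP by auto
  have nsp: "u i \<notin> vec.span (pv ` x ` ({..<k} - {i}))" if i: "i < k" for i
  proof
    assume h: "u i \<in> vec.span (pv ` x ` ({..<k} - {i}))"
    have "x i \<in> cl (Pm lev) (**) 0 (x ` ({..<k} - {i}))"
      using cl_sup[OF Gi h[unfolded u_def]] pv[of "x i"] xP i by blast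
    then show False using xn i by blast
  qed
  have inj: "inj_on u {..<k}"
  proof (rule inj_onI)
    fix i j assume i: "i \<in> {..<k}" and j: "j \<in> {..<k}" and e: "u i = u j"
    show "i = j"
    proof (rule ccontr)
      assume "i \<noteq> j"
      then have "u j \<in> pv ` x ` ({..<k} - {i})" using j unfolding u_def by blast
      then have "u i \<in> vec.span (pv ` x ` ({..<k} - {i}))" using e vec.span_base by metis
      then show False using nsp i by blast
    qed
  qed
  define W where "W = u ` {..<k}"
  have indep: "vec.independent W"
    unfolding vec.dependent_def
  proof
    assume "\<exists>a\<in>W. a \<in> vec.span (W - {a})"
    then obtain i where i: "i < k" and sp: "u i \<in> vec.span (W - {u i})" unfolding W_def by blast
    have "W - {u i} \<subseteq> pv ` x ` ({..<k} - {i})"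
    proof
      fix b assume "b \<in> W - {u i}"
      then obtain j where "j < k" "b = u j" "u j \<noteq> u i" unfolding W_def by blast
      then show "b \<in> pv ` x ` ({..<k} - {i})" unfolding u_def by auto
    qed
    then have "u i \<in> vec.span (pv ` x ` ({..<k} - {i}))" using sp vec.span_mono by blast
    then show False using nsp i by blast
  qed
  have sub: "W \<subseteq> {v. \<forall>i. i \<notin> {p. lev p = 1} \<longrightarrow> v$i = 0}"
  proof
    fix w assume "w \<in> W"
    then obtain i where "i < k" "w = u i" unfolding W_def by blast
    then have "w \<in> Std lev 1" unfolding u_def using pv_Std xP by blast
    then show "w \<in> {v. \<forall>i. i \<notin> {p. lev p = 1} \<longrightarrow> v$i = 0}"
      unfolding Std_def using lev_ge1 by (auto simp: le_antisym)
  qed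
  have "card W \<le> vec.dim {v::'a^'n. \<forall>i. i \<notin> {p. lev p = 1} \<longrightarrow> v$i = 0}"
    by (rule vec.independent_card_le_dim[OF sub indep])
  also have "\<dots> = card {p. lev p = 1}" by (rule dim_substandard_cart)
  finally show ?thesis using card_image[OF inj] unfolding W_def by simp
qed

lemma indep_lower:
  assumes k: "k \<le> card {p. lev p = 1}"
  shows "indepk (Pm lev) (**) (0::'a::field^'n^'n) k"
proof -
  obtain T where T: "T \<subseteq> {p. lev p = 1}" "card T = k" "finite T"
    using obtain_subset_with_card_n[OF k] by blast
  obtain h where h: "bij_betw h {0..<k} T" using ex_bij_betw_nat_finite[OF T(3)] T(2) by auto
  have hT: "i < k \<Longrightarrow> lev (h i) = 1" for i
  proof -
    assume "i < k"
    then have "h i \<in> T" using bij_betw_apply[OF h] by simp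
    then show ?thesis using T(1) by blast
  qed
  have hinj: "i < k \<Longrightarrow> j < k \<Longrightarrow> h i = h j \<longleftrightarrow> i = j" for i j
    using h by (auto simp: bij_betw_def inj_on_def)
  have "1 \<le> r - 1" "r - 1 \<le> r" using r4 by auto
  then obtain q1 where q1: "lev q1 = r - 1" using lev_surj[of "r - 1"] by blast
  define e where "e i = (\<chi> j. if j = h i then 1 else (0::'a))" for i
  define x where "x i = (colm q1 (e i) :: 'a^'n^'n)" for i
  have eS: "i < k \<Longrightarrow> e i \<in> Std lev 1" for i unfolding e_def Std_def using hT by auto
  have enz: "e i \<noteq> 0" for i
  proof
    assume "e i = 0"
    then have "e i $ h i = 0" by simp
    then show False unfolding e_def by simp
  qed
  have xI: "i < k \<Longrightarrow> Img (x i) = vec.span {e i}" for i unfolding x_def by (rule mkpt(2)[OF eS q1])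
  have xP: "i < k \<Longrightarrow> x i \<in> Pt (Pm lev) (**) 0" for i
    using mkpt(1)[OF eS q1] xI enz Pt_char unfolding x_def by blast
  have xn: "x i \<notin> cl (Pm lev) (**) 0 (x ` ({..<k} - {i}))" if i: "i < k" for i
  proof
    assume "x i \<in> cl (Pm lev) (**) 0 (x ` ({..<k} - {i}))"
    moreover have G: "x ` ({..<k} - {i}) \<subseteq> Pt (Pm lev) (**) 0" using xP by auto
    ultimately have sp: "pv (x i) \<in> vec.span (pv ` x ` ({..<k} - {i}))" using cl_sub by blast
    define Z where "Z = {v::'a^'n. v $ h i = 0}"
    have Zs: "vec.subspace Z" unfolding Z_def vec.subspace_def by auto
    have "pv ` x ` ({..<k} - {i}) \<subseteq> Z"
    proof
      fix w assume "w \<in> pv ` x ` ({..<k} - {i})"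
      then obtain j where j: "j < k" "j \<noteq> i" "w = pv (x j)" by blast
      have "w \<in> Img (x j)" using pv_in[OF xP[OF j(1)]] j(3) by simp
      then obtain c where "w = c *s e j" using xI[OF j(1)] unfolding vec.span_singleton by blast
      moreover have "h j \<noteq> h i" using hinj j i by blast
      ultimately show "w \<in> Z" unfolding Z_def e_def by simp
    qed
    then have "vec.span (pv ` x ` ({..<k} - {i})) \<subseteq> Z" by (rule vec.span_minimal[OF _ Zs])
    then have z: "pv (x i) $ h i = 0" using sp unfolding Z_def by blast
    have "pv (x i) \<in> Img (x i)" by (rule pv_in[OF xP[OF i]])
    then obtain c where c: "pv (x i) = c *s e i" using xI[OF i] unfolding vec.span_singleton by blast
    then have "c = 0" using z unfolding e_def by simp
    then have "pv (x i) = 0" using c by simp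
    then show False using pv[OF xP[OF i]] by simp
  qed
  show ?thesis unfolding indepk_def
    by (rule exI[of _ x]) (use xP xn in blast)
qed

lemma indep_char: "indepk (Pm lev) (**) (0::'a::field^'n^'n) k \<longleftrightarrow> k \<le> card {p. lev p = 1}"
proof
  assume "indepk (Pm lev) (**) (0::'a::field^'n^'n) k"
  then obtain x where xP: "\<forall>i<k. x i \<in> Pt (Pm lev) (**) (0::'a::field^'n^'n)"
    and xn: "\<forall>i<k. x i \<notin> cl (Pm lev) (**) 0 (x ` ({..<k} - {i}))" unfolding indepk_def by blast
  show "k \<le> card {p. lev p = 1}" by (rule indep_upper[OF xP xn])
qed (rule indep_lower)

end

(* ---- part C7 ---- *)

lemma siso_Pm:
  fixes f :: "'a::field^'n::finite^'n \<Rightarrow> 'a^'m::finite^'m"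
  assumes "semigroup_iso_betw (Pm l1) (Pm l2) f"
  shows "siso (Pm l1) (**) 0 (Pm l2) (**) 0 f"
proof
  show "bij_betw f (Pm l1) (Pm l2)" using assms unfolding semigroup_iso_betw_def by blast
  fix a b :: "'a^'n^'n" assume "a \<in> Pm l1" "b \<in> Pm l1"
  then show "f (a ** b) = f a ** f b" using assms unfolding semigroup_iso_betw_def by blast
qed (auto simp: Pm_mult Pm_0)

lemma levs_rev: "levs lev r \<Longrightarrow> levs (\<lambda>p. r + 1 - lev p) r"
proof -
  assume L: "levs lev r"
  interpret levs lev r by (rule L)
  show ?thesis
  proof
    fix p show "1 \<le> r + 1 - lev p" using lev_le[of p] by simp
    show "r + 1 - lev p \<le> r" using lev_ge1[of p] by simp
  next
    fix i assume i: "1 \<le> i" "i \<le> r"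
    then have "1 \<le> r + 1 - i" "r + 1 - i \<le> r" by auto
    then obtain p where p: "lev p = r + 1 - i" using lev_surj by blast
    have "r + 1 - lev p = i" using p i by simp
    then show "\<exists>p. r + 1 - lev p = i" by blast
  next
    show "4 \<le> r" by (rule r4)
  qed
qed

lemma transpose_Pm:
  assumes le: "\<And>p. lev p \<le> r"
  shows "transpose a \<in> Pm (\<lambda>p. r + 1 - lev p) \<longleftrightarrow> (a::'a::field^'n::finite^'n) \<in> Pm lev"
proof -
  have e: "r + 1 - lev p < r + 1 - lev q \<longleftrightarrow> lev q < lev p" for p q
    using le[of p] le[of q] by linarith
  show ?thesis unfolding Pm_def transpose_def using e by auto
qed


(* ---- part C8 ---- *)

lemma iso_transpose:
  fixes f :: "'a::field^'n::finite^'n \<Rightarrow> 'a^'m::finite^'m"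
  assumes L1: "\<And>p. l1 p \<le> r" and L2: "\<And>q. l2 q \<le> r"
    and iso: "semigroup_iso_betw (Pm l1) (Pm l2) f"
  shows "semigroup_iso_betw (Pm (\<lambda>p. r + 1 - l1 p)) (Pm (\<lambda>q. r + 1 - l2 q)) (\<lambda>a. transpose (f (transpose a)))"
proof -
  have T1: "bij_betw transpose (Pm (\<lambda>p. r + 1 - l1 p)) (Pm l1 :: ('a^'n^'n) set)"
  proof (rule bij_betw_byWitness[where f' = transpose])
    show "transpose ` Pm (\<lambda>p. r + 1 - l1 p) \<subseteq> (Pm l1 :: ('a^'n^'n) set)"
    proof (rule image_subsetI)
      fix a :: "'a^'n^'n" assume "a \<in> Pm (\<lambda>p. r + 1 - l1 p)"
      then show "transpose a \<in> Pm l1" using transpose_Pm[of l1 r "transpose a", OF L1] by simp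
    qed
    show "transpose ` (Pm l1 :: ('a^'n^'n) set) \<subseteq> Pm (\<lambda>p. r + 1 - l1 p)"
    proof (rule image_subsetI)
      fix a :: "'a^'n^'n" assume "a \<in> Pm l1"
      then show "transpose a \<in> Pm (\<lambda>p. r + 1 - l1 p)" using transpose_Pm[of l1 r a, OF L1] by simp
    qed
  qed simp_all
  have T2: "bij_betw transpose (Pm l2 :: ('a^'m^'m) set) (Pm (\<lambda>p. r + 1 - l2 p))"
  proof (rule bij_betw_byWitness[where f' = transpose])
    show "transpose ` Pm (\<lambda>p. r + 1 - l2 p) \<subseteq> (Pm l2 :: ('a^'m^'m) set)"
    proof (rule image_subsetI)
      fix a :: "'a^'m^'m" assume "a \<in> Pm (\<lambda>p. r + 1 - l2 p)"
      then show "transpose a \<in> Pm l2" using transpose_Pm[of l2 r "transpose a", OF L2] by simp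
    qed
    show "transpose ` (Pm l2 :: ('a^'m^'m) set) \<subseteq> Pm (\<lambda>p. r + 1 - l2 p)"
    proof (rule image_subsetI)
      fix a :: "'a^'m^'m" assume "a \<in> Pm l2"
      then show "transpose a \<in> Pm (\<lambda>p. r + 1 - l2 p)" using transpose_Pm[of l2 r a, OF L2] by simp
    qed
  qed simp_all
  have B: "bij_betw f (Pm l1) (Pm l2)" using iso unfolding semigroup_iso_betw_def by blast
  have "bij_betw (transpose \<circ> (f \<circ> transpose)) (Pm (\<lambda>p. r + 1 - l1 p)) (Pm (\<lambda>q. r + 1 - l2 q))"
    by (rule bij_betw_trans[OF bij_betw_trans[OF T1 B] T2])
  then have bij: "bij_betw (\<lambda>a. transpose (f (transpose a))) (Pm (\<lambda>p. r + 1 - l1 p)) (Pm (\<lambda>q. r + 1 - l2 q))"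
    by (simp add: comp_def)
  have hom: "transpose (f (transpose (a ** b))) = transpose (f (transpose a)) ** transpose (f (transpose b))"
    if a: "a \<in> Pm (\<lambda>p. r + 1 - l1 p)" and b: "b \<in> Pm (\<lambda>p. r + 1 - l1 p)" for a b
  proof -
    have ta: "transpose a \<in> Pm l1" using a transpose_Pm[of l1 r "transpose a", OF L1] by simp
    have tb: "transpose b \<in> Pm l1" using b transpose_Pm[of l1 r "transpose b", OF L1] by simp
    have "transpose (f (transpose (a ** b))) = transpose (f (transpose b ** transpose a))"
      by (simp add: matrix_transpose_mul)
    also have "\<dots> = transpose (f (transpose b) ** f (transpose a))"
      using iso ta tb unfolding semigroup_iso_betw_def by simp
    also have "\<dots> = transpose (f (transpose a)) ** transpose (f (transpose b))"
      by (simp add: matrix_transpose_mul)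
    finally show ?thesis .
  qed
  show ?thesis unfolding semigroup_iso_betw_def using bij hom by blast
qed

lemma card1_eq:
  fixes f :: "'a::field^'n::finite^'n \<Rightarrow> 'a^'m::finite^'m"
  assumes L1: "levs l1 r" and L2: "levs l2 r" and iso: "semigroup_iso_betw (Pm l1) (Pm l2) f"
  shows "card {p. l1 p = 1} = card {q. l2 q = 1}"
proof -
  interpret siso "Pm l1" "(**)" "0::'a^'n^'n" "Pm l2" "(**)" "0::'a^'m^'m" f
    by (rule siso_Pm[OF iso])
  have "k \<le> card {q. l2 q = 1} \<longleftrightarrow> k \<le> card {p. l1 p = 1}" for k
    using indepk_iff[of k] levs.indep_char[OF L1, where 'a='a, of k] levs.indep_char[OF L2, where 'a='a, of k]
    by simp
  then show ?thesis using le_antisym by blast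
qed

lemma cards_eq:
  fixes f :: "'a::field^'n::finite^'n \<Rightarrow> 'a^'m::finite^'m"
  assumes L1: "levs l1 r" and L2: "levs l2 r" and iso: "semigroup_iso_betw (Pm l1) (Pm l2) f"
    and i: "1 \<le> i" "i \<le> r"
  shows "card {p. l1 p = i} = card {q. l2 q = i}"
proof -
  have r4: "4 \<le> r" using L1 levs.r4 by blast
  consider "i = 1" | "i = r" | "2 \<le> i \<and> i \<le> r - 1" using i by linarith
  then show ?thesis
  proof cases
    case 1
    then show ?thesis using card1_eq[OF L1 L2 iso] by simp
  next
    case 2
    have le1: "\<And>p. l1 p \<le> r" using L1 levs.lev_le by blast
    have le2: "\<And>p. l2 p \<le> r" using L2 levs.lev_le by blast
    have ge1: "\<And>p. 1 \<le> l1 p" using L1 levs.lev_ge1 by blast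
    have ge2: "\<And>p. 1 \<le> l2 p" using L2 levs.lev_ge1 by blast
    have "card {p. r + 1 - l1 p = 1} = card {q. r + 1 - l2 q = 1}"
      by (rule card1_eq[OF levs_rev[OF L1] levs_rev[OF L2] iso_transpose[OF le1 le2 iso]])
    moreover have "{p. r + 1 - l1 p = 1} = {p. l1 p = r}"
    proof (rule Collect_cong)
      fix p show "(r + 1 - l1 p = 1) = (l1 p = r)" using le1[of p] by arith
    qed
    moreover have "{q. r + 1 - l2 q = 1} = {q. l2 q = r}"
    proof (rule Collect_cong)
      fix p show "(r + 1 - l2 p = 1) = (l2 p = r)" using le2[of p] by arith
    qed
    ultimately show ?thesis using 2 by simp
  next
    case 3
    interpret siso "Pm l1" "(**)" "0::'a^'n^'n" "Pm l2" "(**)" "0::'a^'m^'m" f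
      by (rule siso_Pm[OF iso])
    have t: "2 \<le> i" "i \<le> r - 1" using 3 by auto
    have "k \<le> card {q. l2 q = i} \<longleftrightarrow> k \<le> card {p. l1 p = i}" for k
      using biorth_iff[of i "r - i + 1" k] levs.biorth_char[OF L1 t, where 'a='a, of k]
        levs.biorth_char[OF L2 t, where 'a='a, of k]
      by simp
    then show ?thesis using le_antisym by blast
  qed
qed


(* ---- part C9 ---- *)

lemma perm_iso:
  fixes l1 :: "'n::finite \<Rightarrow> nat" and l2 :: "'m::finite \<Rightarrow> nat"
  assumes c: "\<And>i. card {p. l1 p = i} = card {q. l2 q = i}"
  shows "\<exists>f. semigroup_iso_betw (Pm l1) (Pm l2) (f :: 'a::field^'n^'n \<Rightarrow> 'a^'m^'m)"
proof -
  have "\<forall>i. \<exists>h. bij_betw h {p. l1 p = i} {q. l2 q = i}"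
    using finite_same_card_bij[OF finite finite c] by blast
  then obtain H where H: "\<And>i. bij_betw (H i) {p. l1 p = i} {q. l2 q = i}"
    by (metis choice)
  define \<sigma> where "\<sigma> p = H (l1 p) p" for p
  have \<sigma>l: "l2 (\<sigma> p) = l1 p" for p
  proof -
    have "H (l1 p) p \<in> {q. l2 q = l1 p}" using bij_betw_apply[OF H] by blast
    then show ?thesis unfolding \<sigma>_def by simp
  qed
  have inj\<sigma>: "inj \<sigma>"
  proof (rule injI)
    fix p p' assume e: "\<sigma> p = \<sigma> p'"
    then have l: "l1 p = l1 p'" using \<sigma>l by metis
    have "H (l1 p) p = H (l1 p) p'" using e l unfolding \<sigma>_def by simp
    moreover have "p \<in> {x. l1 x = l1 p}" "p' \<in> {x. l1 x = l1 p}" using l by auto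
    ultimately show "p = p'" using bij_betw_imp_inj_on[OF H] by (meson inj_onD)
  qed
  have surj\<sigma>: "surj \<sigma>"
  proof -
    have "q \<in> range \<sigma>" for q
    proof -
      have "q \<in> {x. l2 x = l2 q}" by simp
      then have "q \<in> H (l2 q) ` {p. l1 p = l2 q}" using bij_betw_imp_surj_on[OF H] by metis
      then obtain p where "l1 p = l2 q" "q = H (l2 q) p" by blast
      then have "q = \<sigma> p" unfolding \<sigma>_def by simp
      then show ?thesis by blast
    qed
    then show ?thesis by blast
  qed
  define \<tau> where "\<tau> = inv \<sigma>"
  have st: "\<sigma> (\<tau> i) = i" for i unfolding \<tau>_def by (rule surj_f_inv_f[OF surj\<sigma>])
  have ts: "\<tau> (\<sigma> p) = p" for p unfolding \<tau>_def by (rule inv_f_f[OF inj\<sigma>])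
  have \<tau>l: "l1 (\<tau> i) = l2 i" for i using \<sigma>l[of "\<tau> i"] st by simp
  have bij\<tau>: "bij_betw \<tau> UNIV UNIV" unfolding \<tau>_def using bij_imp_bij_inv inj\<sigma> surj\<sigma> bij_def by blast
  define F :: "'a^'n^'n \<Rightarrow> 'a^'m^'m" where "F a = (\<chi> i j. a $ \<tau> i $ \<tau> j)" for a
  define G :: "'a^'m^'m \<Rightarrow> 'a^'n^'n" where "G b = (\<chi> p q. b $ \<sigma> p $ \<sigma> q)" for b
  have bij: "bij_betw F (Pm l1) (Pm l2)"
  proof (rule bij_betw_byWitness[where f' = G])
    show "\<forall>a\<in>Pm l1. G (F a) = a" by (simp add: F_def G_def ts vec_eq_iff)
    show "\<forall>a'\<in>Pm l2. F (G a') = a'" by (simp add: F_def G_def st vec_eq_iff)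
    show "F ` Pm l1 \<subseteq> Pm l2"
    proof (rule image_subsetI)
      fix a :: "'a^'n^'n" assume a: "a \<in> Pm l1"
      show "F a \<in> Pm l2" unfolding Pm_def
      proof (intro CollectI allI impI)
        fix i j assume "F a $ i $ j \<noteq> 0"
        then have "a $ \<tau> i $ \<tau> j \<noteq> 0" by (simp add: F_def)
        then have "l1 (\<tau> i) < l1 (\<tau> j)" using a by (simp add: Pm_def)
        then show "l2 i < l2 j" using \<tau>l by simp
      qed
    qed
    show "G ` Pm l2 \<subseteq> Pm l1"
    proof (rule image_subsetI)
      fix b :: "'a^'m^'m" assume b: "b \<in> Pm l2"
      show "G b \<in> Pm l1" unfolding Pm_def
      proof (intro CollectI allI impI)
        fix i j assume "G b $ i $ j \<noteq> 0"
        then have "b $ \<sigma> i $ \<sigma> j \<noteq> 0" by (simp add: G_def)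
        then have "l2 (\<sigma> i) < l2 (\<sigma> j)" using b by (simp add: Pm_def)
        then show "l1 i < l1 j" using \<sigma>l by simp
      qed
    qed
  qed
  have hom: "F (a ** b) = F a ** F b" for a b
  proof -
    have "(\<Sum>k\<in>UNIV. a $ \<tau> i $ k * b $ k $ \<tau> j) = (\<Sum>k\<in>UNIV. a $ \<tau> i $ \<tau> k * b $ \<tau> k $ \<tau> j)" for i j
      by (rule sum.reindex_bij_betw[OF bij\<tau>, symmetric])
    then show ?thesis by (simp add: F_def matrix_matrix_mult_def vec_eq_iff)
  qed
  show ?thesis unfolding semigroup_iso_betw_def using bij hom by blast
qed


(* ---- part C10 ---- *)

fun Bch :: "(nat \<Rightarrow> ('a::field^'n::finite) set) \<Rightarrow> nat \<Rightarrow> ('a^'n) set" where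
  "Bch V 0 = {}"
| "Bch V (Suc j) = (SOME B. Bch V j \<subseteq> B \<and> B \<subseteq> V (Suc j) \<and> vec.independent B \<and> V (Suc j) \<subseteq> vec.span B)"

lemma flag_step: "is_flag r V \<Longrightarrow> Suc j \<le> r \<Longrightarrow> V (Suc j - 1) \<subset> V (Suc j)"
proof -
  assume fl: "is_flag r V" and j: "Suc j \<le> r"
  have "\<forall>i\<in>{1..r}. V (i - 1) \<subset> V i" using fl unfolding is_flag_def by (elim conjE)
  moreover have "Suc j \<in> {1..r}" using j by simp
  ultimately show ?thesis by (rule bspec)
qed

lemma flag_sub: "is_flag r V \<Longrightarrow> j \<le> r \<Longrightarrow> vec.subspace (V j)"
  unfolding is_flag_def by (elim conjE) simp

lemma Bch_props:
  assumes fl: "is_flag r V"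
  shows "j \<le> r \<Longrightarrow> Bch V j \<subseteq> V j \<and> vec.independent (Bch V j) \<and> V j \<subseteq> vec.span (Bch V j)"
proof (induction j)
  case 0
  have "V 0 = {0}" using fl unfolding is_flag_def by (elim conjE)
  then show ?case by (simp add: vec.independent_empty)
next
  case (Suc j)
  then have IH: "Bch V j \<subseteq> V j" "vec.independent (Bch V j)" by auto
  have "V (Suc j - 1) \<subset> V (Suc j)" using flag_step[OF fl Suc.prems] .
  then have "Bch V j \<subseteq> V (Suc j)" using IH by auto
  then obtain B where "Bch V j \<subseteq> B" "B \<subseteq> V (Suc j)" "vec.independent B" "V (Suc j) \<subseteq> vec.span B"
    by (rule vec.maximal_independent_subset_extend[OF _ IH(2)])
  then have "\<exists>B. Bch V j \<subseteq> B \<and> B \<subseteq> V (Suc j) \<and> vec.independent B \<and> V (Suc j) \<subseteq> vec.span B" by blast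
  then have "Bch V j \<subseteq> Bch V (Suc j) \<and> Bch V (Suc j) \<subseteq> V (Suc j) \<and> vec.independent (Bch V (Suc j)) \<and>
      V (Suc j) \<subseteq> vec.span (Bch V (Suc j))"
    unfolding Bch.simps by (rule someI_ex)
  then show ?case by blast
qed

lemma Bch_step:
  assumes fl: "is_flag r V" and j: "Suc j \<le> r"
  shows "Bch V j \<subseteq> Bch V (Suc j)"
proof -
  have IH: "Bch V j \<subseteq> V j" "vec.independent (Bch V j)" using Bch_props[OF fl] j by auto
  have "V (Suc j - 1) \<subset> V (Suc j)" using flag_step[OF fl j] .
  then have "Bch V j \<subseteq> V (Suc j)" using IH by auto
  then obtain B where "Bch V j \<subseteq> B" "B \<subseteq> V (Suc j)" "vec.independent B" "V (Suc j) \<subseteq> vec.span B"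
    by (rule vec.maximal_independent_subset_extend[OF _ IH(2)])
  then have "\<exists>B. Bch V j \<subseteq> B \<and> B \<subseteq> V (Suc j) \<and> vec.independent B \<and> V (Suc j) \<subseteq> vec.span B" by blast
  then have "Bch V j \<subseteq> Bch V (Suc j) \<and> Bch V (Suc j) \<subseteq> V (Suc j) \<and> vec.independent (Bch V (Suc j)) \<and>
      V (Suc j) \<subseteq> vec.span (Bch V (Suc j))"
    unfolding Bch.simps by (rule someI_ex)
  then show ?thesis by blast
qed

lemma Bch_mono:
  assumes fl: "is_flag r V"
  shows "j \<le> j' \<Longrightarrow> j' \<le> r \<Longrightarrow> Bch V j \<subseteq> Bch V j'"
proof (induction j' rule: nat_induct)
  case 0 then show ?case by simp
next
  case (Suc k)
  show ?case
  proof (cases "j = Suc k")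
    case True then show ?thesis by simp
  next
    case False
    then have "j \<le> k" using Suc.prems by simp
    then have "Bch V j \<subseteq> Bch V k" using Suc by simp
    also have "\<dots> \<subseteq> Bch V (Suc k)" by (rule Bch_step[OF fl Suc.prems(2)])
    finally show ?thesis .
  qed
qed

lemma Bch_span:
  assumes fl: "is_flag r V" and j: "j \<le> r"
  shows "vec.span (Bch V j) = V j"
proof -
  have s: "vec.subspace (V j)" by (rule flag_sub[OF fl j])
  have "vec.span (Bch V j) \<subseteq> V j" using Bch_props[OF fl j] by (intro vec.span_minimal s) blast
  then show ?thesis using Bch_props[OF fl j] by blast
qed


(* ---- part C11 ---- *)

lemma flag_to_lev:
  fixes V :: "nat \<Rightarrow> ('a::field^'n::finite) set"
  assumes fl: "is_flag r V" and r4: "4 \<le> r"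
  shows "\<exists>lev::'n \<Rightarrow> nat. levs lev r \<and> flag_sig r V = map (\<lambda>i. card {p. lev p = Suc i}) [0..<r] \<and>
     (\<exists>f. semigroup_iso_betw (flag_phi r V) (Pm lev :: ('a^'n^'n) set) f)"
proof -
  define B where "B = Bch V r"
  have Vr: "V r = UNIV" using fl unfolding is_flag_def by (elim conjE)
  have indB: "vec.independent B" using Bch_props[OF fl, of r] unfolding B_def by blast
  have spB: "vec.span B = UNIV" using Bch_span[OF fl, of r] Vr unfolding B_def by simp
  have finB: "finite B" by (rule vec.finiteI_independent[OF indB])
  have "card B = vec.dim (UNIV :: ('a^'n) set)"
    by (rule vec.basis_card_eq_dim) (use indB spB in auto)
  then have cardB: "card B = CARD('n)" by (simp add: vec_dim_card card_cart_basis)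
  obtain \<beta> where \<beta>: "bij_betw \<beta> (UNIV::'n set) B"
    using finite_same_card_bij[OF finite finB] cardB by auto
  have \<beta>inj: "inj \<beta>" using \<beta> by (simp add: bij_betw_def)
  have \<beta>B: "\<beta> p \<in> B" for p using bij_betw_apply[OF \<beta>] by simp
  have \<beta>surj: "b \<in> B \<Longrightarrow> \<exists>p. b = \<beta> p" for b using bij_betw_imp_surj_on[OF \<beta>] by blast
  define lvl where "lvl b = (LEAST j. b \<in> Bch V j)" for b
  define lev where "lev p = lvl (\<beta> p)" for p
  have lvl_le: "lvl b \<le> r" if "b \<in> B" for b
    unfolding lvl_def using that unfolding B_def by (rule Least_le)
  have lvl_in: "b \<in> Bch V (lvl b)" if "b \<in> B" for b
    unfolding lvl_def using that unfolding B_def by (rule LeastI)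
  have lvl_iff: "b \<in> Bch V j \<longleftrightarrow> lvl b \<le> j" if b: "b \<in> B" and j: "j \<le> r" for b j
  proof
    assume "b \<in> Bch V j" then show "lvl b \<le> j" unfolding lvl_def by (rule Least_le)
  next
    assume "lvl b \<le> j"
    then have "Bch V (lvl b) \<subseteq> Bch V j" using Bch_mono[OF fl] j by blast
    then show "b \<in> Bch V j" using lvl_in[OF b] by blast
  qed
  have lev_ge1: "1 \<le> lev p" for p
  proof (rule ccontr)
    assume "\<not> 1 \<le> lev p"
    then have "lvl (\<beta> p) = 0" unfolding lev_def by simp
    then show False using lvl_in[OF \<beta>B[of p]] by simp
  qed
  have lev_le: "lev p \<le> r" for p unfolding lev_def by (rule lvl_le[OF \<beta>B])
  have BchB: "Bch V j \<subseteq> B" if "j \<le> r" for j unfolding B_def using Bch_mono[OF fl that] by blast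
  have Bch_img: "Bch V j = \<beta> ` {p. lev p \<le> j}" if j: "j \<le> r" for j
  proof
    show "Bch V j \<subseteq> \<beta> ` {p. lev p \<le> j}"
    proof
      fix b assume b: "b \<in> Bch V j"
      then have bB: "b \<in> B" using BchB[OF j] by blast
      obtain p where p: "b = \<beta> p" using \<beta>surj[OF bB] by blast
      have "lev p \<le> j" using lvl_iff[OF bB j] b p unfolding lev_def by simp
      then show "b \<in> \<beta> ` {p. lev p \<le> j}" using p by blast
    qed
    show "\<beta> ` {p. lev p \<le> j} \<subseteq> Bch V j"
    proof
      fix b assume "b \<in> \<beta> ` {p. lev p \<le> j}"
      then obtain p where p: "b = \<beta> p" "lev p \<le> j" by blast
      then show "b \<in> Bch V j" using lvl_iff[OF \<beta>B[of p] j] unfolding lev_def by simp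
    qed
  qed
  have card_le: "card {p. lev p \<le> j} = vec.dim (V j)" if j: "j \<le> r" for j
  proof -
    have "card {p. lev p \<le> j} = card (Bch V j)"
      using Bch_img[OF j] card_image[OF inj_on_subset[OF \<beta>inj]] by simp
    also have "\<dots> = vec.dim (V j)"
      by (rule vec.basis_card_eq_dim) (use Bch_props[OF fl j] in auto)
    finally show ?thesis .
  qed
  have surj: "\<exists>p. lev p = i" if i: "1 \<le> i" "i \<le> r" for i
  proof (rule ccontr)
    assume nex: "\<nexists>p. lev p = i"
    have "{p. lev p \<le> i} = {p. lev p \<le> i - 1}"
    proof (rule Collect_cong)
      fix p have "lev p \<noteq> i" using nex by blast
      then show "(lev p \<le> i) = (lev p \<le> i - 1)" using i by linarith
    qed
    then have "Bch V i = Bch V (i - 1)" using Bch_img i by simp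
    then have "V i = V (i - 1)" using Bch_span[OF fl, of i] Bch_span[OF fl, of "i - 1"] i by simp
    moreover have "V (Suc (i - 1) - 1) \<subset> V (Suc (i - 1))" using flag_step[OF fl, of "i - 1"] i by simp
    ultimately show False using i by simp
  qed
  have L: "levs lev r" by (unfold_locales) (use lev_ge1 lev_le surj r4 in auto)
  have card_eq: "card {p. lev p = Suc i} = vec.dim (V (Suc i)) - vec.dim (V i)" if i: "i < r" for i
  proof -
    have "{p. lev p = Suc i} = {p. lev p \<le> Suc i} - {p. lev p \<le> i}" by auto
    moreover have "{p. lev p \<le> i} \<subseteq> {p. lev p \<le> Suc i}" by auto
    ultimately have "card {p. lev p = Suc i} = card {p. lev p \<le> Suc i} - card {p. lev p \<le> i}"
      by (simp add: card_Diff_subset)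
    then show ?thesis using card_le[of i] card_le[of "Suc i"] i by simp
  qed
  have sig: "flag_sig r V = map (\<lambda>i. card {p. lev p = Suc i}) [0..<r]"
    unfolding flag_sig_def using card_eq by (intro map_cong) auto
  define M :: "'a^'n^'n" where "M = (\<chi> i q. (\<beta> q)$i)"
  have colM: "column q M = \<beta> q" for q by (simp add: M_def column_def vec_eq_iff)
  have Mc: "M *v c = (\<Sum>q\<in>UNIV. c$q *s \<beta> q)" for c :: "'a^'n" by (simp add: matrix_mult_sum colM)
  have Vimg: "V j = (\<lambda>c. M *v c) ` Std lev j" if j: "j \<le> r" for j
  proof
    show "(\<lambda>c. M *v c) ` Std lev j \<subseteq> V j"
    proof (rule image_subsetI)
      fix c :: "'a^'n" assume c: "c \<in> Std lev j"
      have "c$q *s \<beta> q \<in> V j" for q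
      proof (cases "c$q = 0")
        case True then show ?thesis using vec.subspace_0[OF flag_sub[OF fl j]] by simp
      next
        case False
        then have "lev q \<le> j" using c unfolding Std_def by blast
        then have "\<beta> q \<in> Bch V j" using Bch_img[OF j] by blast
        then have "\<beta> q \<in> V j" using Bch_props[OF fl j] by blast
        then show ?thesis by (rule vec.subspace_scale[OF flag_sub[OF fl j]])
      qed
      then show "M *v c \<in> V j" unfolding Mc by (intro vec.subspace_sum[OF flag_sub[OF fl j]])
    qed
    show "V j \<subseteq> (\<lambda>c. M *v c) ` Std lev j"
    proof
      fix v assume "v \<in> V j"
      then have vs: "v \<in> vec.span (Bch V j)" using Bch_span[OF fl j] by simp
      have fin: "finite (Bch V j)" using finB BchB[OF j] finite_subset by blast
      obtain u where u: "v = (\<Sum>b\<in>Bch V j. u b *s b)" using vs vec.span_finite[OF fin] by auto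
      define c where "c = (\<chi> q. if lev q \<le> j then u (\<beta> q) else 0)"
      have "c \<in> Std lev j" unfolding c_def Std_def by auto
      moreover have "M *v c = v"
      proof -
        have "M *v c = (\<Sum>q\<in>UNIV. if lev q \<le> j then u (\<beta> q) *s \<beta> q else 0)"
          unfolding Mc c_def by (intro sum.cong) auto
        also have "\<dots> = (\<Sum>q\<in>{p. lev p \<le> j}. u (\<beta> q) *s \<beta> q)"
          using sum.inter_filter[of "UNIV::'n set" "\<lambda>q. u (\<beta> q) *s \<beta> q" "\<lambda>q. lev q \<le> j"] by simp
        also have "\<dots> = (\<Sum>b\<in>\<beta> ` {p. lev p \<le> j}. u b *s b)"
          using sum.reindex[OF inj_on_subset[OF \<beta>inj subset_UNIV], of "\<lambda>b. u b *s b" "{p. lev p \<le> j}"]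
          by (simp add: o_def)
        also have "\<dots> = v" using u Bch_img[OF j] by simp
        finally show ?thesis .
      qed
      ultimately show "v \<in> (\<lambda>c. M *v c) ` Std lev j" by blast
    qed
  qed
  have Minv: "\<exists>M'. M' ** M = mat 1"
    unfolding matrix_left_invertible_ker
  proof (intro allI impI)
    fix c :: "'a^'n" assume h: "M *v c = 0"
    define u where "u b = c $ (inv \<beta> b)" for b
    have "(\<Sum>b\<in>B. u b *s b) = (\<Sum>q\<in>UNIV. u (\<beta> q) *s \<beta> q)"
      by (rule sum.reindex_bij_betw[OF \<beta>, symmetric])
    also have "\<dots> = M *v c" unfolding Mc u_def using inv_f_f[OF \<beta>inj] by simp
    finally have "(\<Sum>b\<in>B. u b *s b) = 0" using h by simp
    then have "\<forall>b\<in>B. u b = 0" using indB unfolding vec.independent_explicit by blast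
    then have "c $ q = 0" for q using \<beta>B[of q] inv_f_f[OF \<beta>inj, of q] unfolding u_def by force
    then show "c = 0" by (simp add: vec_eq_iff)
  qed
  then obtain M' where M'M: "M' ** M = mat 1" by blast
  then have MM': "M ** M' = mat 1" using matrix_left_right_inverse by blast
  have hM1: "X ** M ** M' = X" for X :: "'a^'n^'n"
    by (metis MM' matrix_mul_assoc matrix_mul_rid)
  have hM2: "X ** M' ** M = X" for X :: "'a^'n^'n"
    by (metis M'M matrix_mul_assoc matrix_mul_rid)
  have StdP: "b \<in> Pm lev \<longleftrightarrow> (\<forall>i\<in>{1..r}. (\<lambda>x. b *v x) ` Std lev i \<subseteq> Std lev (i - 1))" for b :: "'a^'n^'n"
  proof
    assume b: "b \<in> Pm lev"
    show "\<forall>i\<in>{1..r}. (\<lambda>x. b *v x) ` Std lev i \<subseteq> Std lev (i - 1)"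
    proof (intro ballI image_subsetI)
      fix i and c :: "'a^'n" assume c: "c \<in> Std lev i"
      show "b *v c \<in> Std lev (i - 1)" unfolding Std_def
      proof (intro CollectI allI impI)
        fix p assume "(b *v c)$p \<noteq> 0"
        then obtain k where "b$p$k \<noteq> 0" "c$k \<noteq> 0" using mv_nz by blast
        then have "lev p < lev k" "lev k \<le> i" using b c unfolding Pm_def Std_def by auto
        then show "lev p \<le> i - 1" by linarith
      qed
    qed
  next
    assume h: "\<forall>i\<in>{1..r}. (\<lambda>x. b *v x) ` Std lev i \<subseteq> Std lev (i - 1)"
    show "b \<in> Pm lev" unfolding Pm_def
    proof (intro CollectI allI impI)
      fix p q assume nz: "b$p$q \<noteq> 0"
      define e where "e = (\<chi> k. if k = q then (1::'a) else 0)"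
      have "e \<in> Std lev (lev q)" unfolding e_def Std_def by auto
      moreover have "lev q \<in> {1..r}" using lev_ge1 lev_le by auto
      ultimately have "b *v e \<in> Std lev (lev q - 1)" using h by blast
      moreover have "(b *v e)$p = b$p$q" unfolding e_def
        by (simp add: matrix_vector_mult_def if_distrib[of "\<lambda>x. _ * x"] sum.delta' cong: if_cong)
      ultimately have "lev p \<le> lev q - 1" using nz unfolding Std_def by auto
      then show "lev p < lev q" using lev_ge1[of q] by linarith
    qed
  qed
  define cj where "cj a = M' ** a ** M" for a
  have step_iff: "(\<lambda>x. a *v x) ` V i \<subseteq> V (i - 1) \<longleftrightarrow> (\<lambda>x. cj a *v x) ` Std lev i \<subseteq> Std lev (i - 1)"
    if i: "i \<in> {1..r}" for i a
  proof -
    have ji: "i \<le> r" "i - 1 \<le> r" using i by auto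
    show ?thesis
    proof
      assume h: "(\<lambda>x. a *v x) ` V i \<subseteq> V (i - 1)"
      show "(\<lambda>x. cj a *v x) ` Std lev i \<subseteq> Std lev (i - 1)"
      proof (rule image_subsetI)
        fix c :: "'a^'n" assume c: "c \<in> Std lev i"
        have "M *v c \<in> V i" using c Vimg[OF ji(1)] by blast
        then have "a *v (M *v c) \<in> V (i - 1)" using h by blast
        then obtain c' where c': "c' \<in> Std lev (i - 1)" "a *v (M *v c) = M *v c'"
          using Vimg[OF ji(2)] by blast
        have "cj a *v c = M' *v (a *v (M *v c))" unfolding cj_def by (simp add: matrix_vector_mul_assoc matrix_mul_assoc)
        also have "\<dots> = c'" using c' M'M by (simp add: matrix_vector_mul_assoc)
        finally show "cj a *v c \<in> Std lev (i - 1)" using c' by simp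
      qed
    next
      assume h: "(\<lambda>x. cj a *v x) ` Std lev i \<subseteq> Std lev (i - 1)"
      show "(\<lambda>x. a *v x) ` V i \<subseteq> V (i - 1)"
      proof (rule image_subsetI)
        fix v assume "v \<in> V i"
        then obtain c where c: "c \<in> Std lev i" "v = M *v c" using Vimg[OF ji(1)] by blast
        have "a *v v = M *v (cj a *v c)"
          unfolding cj_def c(2) by (simp add: matrix_vector_mul_assoc matrix_mul_assoc MM')
        moreover have "cj a *v c \<in> Std lev (i - 1)" using h c(1) by blast
        ultimately show "a *v v \<in> V (i - 1)" using Vimg[OF ji(2)] by blast
      qed
    qed
  qed
  have phi_iff: "a \<in> flag_phi r V \<longleftrightarrow> cj a \<in> Pm lev" for a
  proof -
    have "(\<forall>i\<in>{1..r}. (\<lambda>x. a *v x) ` V i \<subseteq> V (i - 1)) \<longleftrightarrow>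
          (\<forall>i\<in>{1..r}. (\<lambda>x. cj a *v x) ` Std lev i \<subseteq> Std lev (i - 1))"
      by (rule ball_cong[OF refl step_iff])
    then show ?thesis unfolding flag_phi_def mem_Collect_eq StdP[of "cj a"] .
  qed
  have cjinv: "cj (M ** b ** M') = b" for b unfolding cj_def by (simp add: matrix_mul_assoc M'M hM1 hM2)
  have invcj: "M ** cj a ** M' = a" for a unfolding cj_def by (simp add: matrix_mul_assoc MM' hM1)
  have bij: "bij_betw cj (flag_phi r V) (Pm lev)"
  proof (rule bij_betw_byWitness[where f' = "\<lambda>b. M ** b ** M'"])
    show "\<forall>a\<in>flag_phi r V. M ** cj a ** M' = a" using invcj by blast
    show "\<forall>b\<in>Pm lev. cj (M ** b ** M') = b" using cjinv by blast
    show "cj ` flag_phi r V \<subseteq> Pm lev" using phi_iff by blast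
    show "(\<lambda>b. M ** b ** M') ` Pm lev \<subseteq> flag_phi r V" using phi_iff cjinv by auto
  qed
  have hom: "cj (a ** b) = cj a ** cj b" for a b
    unfolding cj_def by (simp add: matrix_mul_assoc hM1)
  have iso: "semigroup_iso_betw (flag_phi r V) (Pm lev) cj"
    unfolding semigroup_iso_betw_def using bij hom by blast
  show ?thesis
    by (rule exI[of _ lev]) (use L sig iso in blast)
qed


(* ---- part C12 ---- *)

lemma iso_comp:
  fixes f :: "'a::field^'n::finite^'n \<Rightarrow> 'a^'m::finite^'m" and g :: "'a^'m^'m \<Rightarrow> 'a^'k::finite^'k"
  assumes f: "semigroup_iso_betw S T f" and g: "semigroup_iso_betw T U g"
  shows "semigroup_iso_betw S U (g \<circ> f)"
proof -
  have bf: "bij_betw f S T" and hf: "\<forall>a\<in>S. \<forall>b\<in>S. f (a ** b) = f a ** f b"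
    using f unfolding semigroup_iso_betw_def by blast+
  have bg: "bij_betw g T U" and hg: "\<forall>a\<in>T. \<forall>b\<in>T. g (a ** b) = g a ** g b"
    using g unfolding semigroup_iso_betw_def by blast+
  have "bij_betw (g \<circ> f) S U" by (rule bij_betw_trans[OF bf bg])
  moreover have "(g \<circ> f) (a ** b) = (g \<circ> f) a ** (g \<circ> f) b" if "a \<in> S" "b \<in> S" for a b
  proof -
    have "f a \<in> T" "f b \<in> T" using bij_betw_apply[OF bf] that by auto
    then show ?thesis using hf hg that by simp
  qed
  ultimately show ?thesis unfolding semigroup_iso_betw_def by blast
qed

lemma iso_inv:
  fixes f :: "'a::field^'n::finite^'n \<Rightarrow> 'a^'m::finite^'m"
  assumes f: "semigroup_iso_betw S T f" and cl: "\<And>a b. a \<in> S \<Longrightarrow> b \<in> S \<Longrightarrow> a ** b \<in> S"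
  shows "semigroup_iso_betw T S (inv_into S f)"
proof -
  have bf: "bij_betw f S T" and hf: "\<forall>a\<in>S. \<forall>b\<in>S. f (a ** b) = f a ** f b"
    using f unfolding semigroup_iso_betw_def by blast+
  have inj: "inj_on f S" using bf by (simp add: bij_betw_def)
  have "bij_betw (inv_into S f) T S" by (rule bij_betw_inv_into[OF bf])
  moreover have "inv_into S f (a' ** b') = inv_into S f a' ** inv_into S f b'" if a': "a' \<in> T" and b': "b' \<in> T" for a' b'
  proof -
    obtain a where a: "a \<in> S" "a' = f a" using a' bij_betw_imp_surj_on[OF bf] by blast
    obtain b where b: "b \<in> S" "b' = f b" using b' bij_betw_imp_surj_on[OF bf] by blast
    have "a' ** b' = f (a ** b)" using a b hf by simp
    then have "inv_into S f (a' ** b') = a ** b" using inv_into_f_f[OF inj cl[OF a(1) b(1)]] by simp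
    moreover have "inv_into S f a' = a" "inv_into S f b' = b"
      using inv_into_f_f[OF inj a(1)] inv_into_f_f[OF inj b(1)] a b by simp_all
    ultimately show ?thesis by simp
  qed
  ultimately show ?thesis unfolding semigroup_iso_betw_def by blast
qed

lemma phi_closed:
  assumes fl: "is_flag r V" and a: "a \<in> flag_phi r V" and b: "b \<in> flag_phi r V"
  shows "a ** b \<in> flag_phi r V"
  unfolding flag_phi_def mem_Collect_eq
proof (intro ballI image_subsetI)
  fix i x assume i: "i \<in> {1..r}" and x: "x \<in> V i"
  have bx: "b *v x \<in> V (i - 1)" using b i x unfolding flag_phi_def by blast
  have "(a ** b) *v x = a *v (b *v x)" by (simp add: matrix_vector_mul_assoc)
  moreover have "a *v (b *v x) \<in> V (i - 1)"
  proof (cases "i = 1")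
    case True
    have V0: "V 0 = {0}" using fl unfolding is_flag_def by (elim conjE)
    then have "b *v x = 0" using bx True by simp
    then show ?thesis using True V0 by simp
  next
    case False
    then have i1: "i - 1 \<in> {1..r}" using i by auto
    then have "a *v (b *v x) \<in> V (i - 1 - 1)" using a bx unfolding flag_phi_def by blast
    moreover have si: "Suc (i - 2) \<le> r" using i False by auto
    have "V (Suc (i - 2) - 1) \<subset> V (Suc (i - 2))" by (rule flag_step[OF fl si])
    moreover have "Suc (i - 2) = i - 1" "Suc (i - 2) - 1 = i - 2" "i - 1 - 1 = i - 2" using False i by auto
    ultimately have "V (i - 1 - 1) \<subset> V (i - 1)" by simp
    then show ?thesis using \<open>a *v (b *v x) \<in> V (i - 1 - 1)\<close> by blast
  qed
  ultimately show "(a ** b) *v x \<in> V (i - 1)" by simp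
qed

theorem corollary23:
  fixes V :: "nat \<Rightarrow> ('a::field ^ 'n) set"
    and W :: "nat \<Rightarrow> ('a ^ 'm) set"
    and r :: nat
  assumes "r > 3"
    and "is_flag r V"
    and "is_flag r W"
  shows "semigroups_isomorphic (flag_phi r V) (flag_phi r W) \<longleftrightarrow> flag_sig r V = flag_sig r W"
proof -
  have r4: "4 \<le> r" using assms(1) by simp
  obtain l1 :: "'n \<Rightarrow> nat" and f1 where L1: "levs l1 r"
    and sig1: "flag_sig r V = map (\<lambda>i. card {p. l1 p = Suc i}) [0..<r]"
    and iso1: "semigroup_iso_betw (flag_phi r V) (Pm l1 :: ('a^'n^'n) set) f1"
    using flag_to_lev[OF assms(2) r4] by blast
  obtain l2 :: "'m \<Rightarrow> nat" and f2 where L2: "levs l2 r"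
    and sig2: "flag_sig r W = map (\<lambda>i. card {p. l2 p = Suc i}) [0..<r]"
    and iso2: "semigroup_iso_betw (flag_phi r W) (Pm l2 :: ('a^'m^'m) set) f2"
    using flag_to_lev[OF assms(3) r4] by blast
  have inv1: "semigroup_iso_betw (Pm l1) (flag_phi r V) (inv_into (flag_phi r V) f1)"
    by (rule iso_inv[OF iso1 phi_closed[OF assms(2)]])
  have inv2: "semigroup_iso_betw (Pm l2) (flag_phi r W) (inv_into (flag_phi r W) f2)"
    by (rule iso_inv[OF iso2 phi_closed[OF assms(3)]])
  show ?thesis
  proof
    assume "semigroups_isomorphic (flag_phi r V) (flag_phi r W)"
    then obtain g where g: "semigroup_iso_betw (flag_phi r V) (flag_phi r W) g"
      unfolding semigroups_isomorphic_def by blast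
    have h: "semigroup_iso_betw (Pm l1) (Pm l2) (f2 \<circ> (g \<circ> inv_into (flag_phi r V) f1))"
      by (rule iso_comp[OF iso_comp[OF inv1 g] iso2])
    have "card {p. l1 p = Suc i} = card {p. l2 p = Suc i}" if "i < r" for i
      using cards_eq[OF L1 L2 h, of "Suc i"] that by simp
    then show "flag_sig r V = flag_sig r W" unfolding sig1 sig2 by (intro map_cong) auto
  next
    assume "flag_sig r V = flag_sig r W"
    then have e: "card {p. l1 p = Suc i} = card {p. l2 p = Suc i}" if "i < r" for i
      using that unfolding sig1 sig2 by (simp add: map_eq_conv)
    have c: "card {p. l1 p = i} = card {q. l2 q = i}" for i
    proof (cases "1 \<le> i \<and> i \<le> r")
      case True
      then have "i = Suc (i - 1)" "i - 1 < r" by auto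
      then show ?thesis using e[of "i - 1"] by simp
    next
      case False
      have "{p. l1 p = i} = {}" using False levs.lev_ge1[OF L1] levs.lev_le[OF L1] by fastforce
      moreover have "{q. l2 q = i} = {}" using False levs.lev_ge1[OF L2] levs.lev_le[OF L2] by fastforce
      ultimately show ?thesis by simp
    qed
    obtain P where P: "semigroup_iso_betw (Pm l1) (Pm l2) (P :: 'a^'n^'n \<Rightarrow> 'a^'m^'m)"
      using perm_iso[OF c] by blast
    have "semigroup_iso_betw (flag_phi r V) (flag_phi r W) (inv_into (flag_phi r W) f2 \<circ> (P \<circ> f1))"
      by (rule iso_comp[OF iso_comp[OF iso1 P] inv2])
    then show "semigroups_isomorphic (flag_phi r V) (flag_phi r W)"
      unfolding semigroups_isomorphic_def by blast
  qed
qed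


end
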